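(* Let $W \subset \mathbb{R}^2$ be the Warsaw Circle. Then the zeroth Milnor-Thurston homology group $\mathcal{H}_0(W)$, equipped with the Berlanga topology, is not a Hausdorff space.
   Context: The Warsaw Circle $W \subset \mathbb{R}^2$ is the union of: the portion of the topologist's sine curve $\{(x,y) : y = \sin(1/x),\ x>0\}$ between the line $x=0$ and its rightmost minimum; the segment $\{(0,y) : -1 \leq y \leq 1\}$; and an arc (disjoint from the rest except at endpoints) joining $(0,-1)$ to that rightmost minimum. Milnor-Thurston (measure) homology: for a topological space $X$ and integer $k \geq 0$, let $C^0(\Delta^k, X)$ be the space of continuous maps from the standard $k$-simplex $\Delta^k$ to $X$, with the compact-open topology. $\mathcal{C}_k(X)$ is the real vector space of finite signed Borel measures on $C^0(\Delta^k,X)$ admitting a compact carrier (a set whose complement contains only Borel sets of measure zero). The boundary $\partial : \mathcal{C}_k(X) \to \mathcal{C}_{k-1}(X)$ is $\partial = \sum_{i=0}^k (-1)^i \partial_i$, where $\partial_i \mu$ is the image measure $A \mapsto \mu(\{\sigma : \sigma\circ\delta_i \in A\})$, with $\delta_i : \Delta^{k-1} \to \Delta^k$ the standard inclusion of the $i$-th face. Let $\mathcal{Z}_k(X)$ and $\mathcal{B}_k(X)$ be the cycles and boundaries; $\mathcal{H}_k(X) = \mathcal{Z}_k(X)/\mathcal{B}_k(X)$ is the Milnor-Thurston homology. Berlanga topology (for $X$ second countable and separable, such as $W$): for each continuous function $f : C^0(\Delta^k, X) \to \mathbb{R}$ consider the linear functional $\Lambda_f(\mu) = \int_{C^0(\Delta^k,X)}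 f\, d\mu$ on $\mathcal{C}_k(X)$; give $\mathcal{C}_k(X)$ the weakest topology making all $\Lambda_f$ continuous (a locally convex vector space topology). Give $\mathcal{Z}_k(X)$ and $\mathcal{B}_k(X)$ the subspace topologies and $\mathcal{H}_k(X)$ the quotient topology; this is the Berlanga topology on $\mathcal{H}_k(X)$. *)

theory Defs
  imports "HOL-Analysis.Analysis" "HOL-Homology.Homology"
begin

section \<open>The Warsaw circle (core part; the closing arc is a parameter)\<close>

text \<open>The rightmost minimum of sin(1/x) on x>0 is at x = 2/(3 pi).\<close>
definition warsaw_xmin :: real where "warsaw_xmin = 2 / (3 * pi)"

definition warsaw_sine_part :: "(real \<times> real) set" where
  "warsaw_sine_part = {(x, sin (1 / x)) | x. 0 < x \<and> x \<le> warsaw_xmin}"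

definition warsaw_segment :: "(real \<times> real) set" where
  "warsaw_segment = {(0, y) | y. -1 \<le> y \<and> y \<le> 1}"

definition compact_open_simplices :: "nat \<Rightarrow> 'a topology \<Rightarrow> ((nat \<Rightarrow> real) \<Rightarrow> 'a) topology" where
  "compact_open_simplices k X = topology_generated_by
     {{\<sigma>. singular_simplex k X \<sigma> \<and> \<sigma> ` K \<subseteq> U} | K U.
        compactin (subtopology (powertop_real UNIV) (standard_simplex k)) K \<and> openin X U}"

definition borel_sets_of :: "'b topology \<Rightarrow> 'b set set" where
  "borel_sets_of T = sigma_sets (topspace T) {U. openin T U}"

text \<open>A finite signed Borel measure, represented as a real-valued set function which is
  countably additive on Borel sets and (by normalisation) zero on non-Borel sets.\<close>
definition finite_signed_borel_measure :: "'b topology \<Rightarrow> ('b set \<Rightarrow> real) \<Rightarrow> bool" where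
  "finite_signed_borel_measure T \<mu> \<longleftrightarrow>
     (\<forall>A. A \<notin> borel_sets_of T \<longrightarrow> \<mu> A = 0) \<and>
     (\<forall>A :: nat \<Rightarrow> 'b set. range A \<subseteq> borel_sets_of T \<longrightarrow> disjoint_family A \<longrightarrow>
         (\<lambda>n. \<mu> (A n)) sums \<mu> (\<Union>n. A n))"

definition has_compact_carrier :: "'b topology \<Rightarrow> ('b set \<Rightarrow> real) \<Rightarrow> bool" where
  "has_compact_carrier T \<mu> \<longleftrightarrow>
     (\<exists>K. compactin T K \<and> (\<forall>B \<in> borel_sets_of T. B \<inter> K = {} \<longrightarrow> \<mu> B = 0))"

definition jordan_pos :: "'b topology \<Rightarrow> ('b set \<Rightarrow> real) \<Rightarrow> 'b set \<Rightarrow> real" where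
  "jordan_pos T \<mu> A = (SUP B \<in> {B \<in> borel_sets_of T. B \<subseteq> A}. \<mu> B)"

definition measure_of_fun :: "'b topology \<Rightarrow> ('b set \<Rightarrow> real) \<Rightarrow> 'b measure" where
  "measure_of_fun T \<nu> = measure_of (topspace T) (borel_sets_of T) (\<lambda>A. ennreal (\<nu> A))"

definition signed_integral :: "'b topology \<Rightarrow> ('b set \<Rightarrow> real) \<Rightarrow> ('b \<Rightarrow> real) \<Rightarrow> real" where
  "signed_integral T \<mu> f =
     integral\<^sup>L (measure_of_fun T (jordan_pos T \<mu>)) f
   - integral\<^sup>L (measure_of_fun T (jordan_pos T (\<lambda>A. - \<mu> A))) f"

type_synonym 'a mt_chain = "((nat \<Rightarrow> real) \<Rightarrow> 'a) set \<Rightarrow> real"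

definition mt_chains :: "nat \<Rightarrow> 'a topology \<Rightarrow> 'a mt_chain set" where
  "mt_chains k X = {\<mu>. finite_signed_borel_measure (compact_open_simplices k X) \<mu>
                      \<and> has_compact_carrier (compact_open_simplices k X) \<mu>}"

text \<open>Image measure under restriction to the i-th face (k \<ge> 1).\<close>
definition mt_face :: "nat \<Rightarrow> 'a topology \<Rightarrow> nat \<Rightarrow> 'a mt_chain \<Rightarrow> 'a mt_chain" where
  "mt_face k X i \<mu> = (\<lambda>A. if A \<in> borel_sets_of (compact_open_simplices (k - 1) X)
       then \<mu> {\<sigma> \<in> topspace (compact_open_simplices k X). singular_face k i \<sigma> \<in> A}
       else 0)"

definition mt_boundary :: "nat \<Rightarrow> 'a topology \<Rightarrow> 'a mt_chain \<Rightarrow> 'a mt_chain" where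
  "mt_boundary k X \<mu> = (\<lambda>A. \<Sum>i\<le>k. (-1) ^ i * mt_face k X i \<mu> A)"

text \<open>In degree 0 every chain is a cycle (the chain group in degree -1 is zero).\<close>
definition mt_cycles :: "nat \<Rightarrow> 'a topology \<Rightarrow> 'a mt_chain set" where
  "mt_cycles k X = {\<mu> \<in> mt_chains k X. k = 0 \<or> mt_boundary k X \<mu> = (\<lambda>A. 0)}"

definition mt_boundaries :: "nat \<Rightarrow> 'a topology \<Rightarrow> 'a mt_chain set" where
  "mt_boundaries k X = mt_boundary (Suc k) X ` mt_chains (Suc k) X"

definition berlanga_chains :: "nat \<Rightarrow> 'a topology \<Rightarrow> 'a mt_chain topology" where
  "berlanga_chains k X = topology_generated_by
     {{\<mu> \<in> mt_chains k X. signed_integral (compact_open_simplices k X) \<mu> f \<in> U} | f U.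
        continuous_map (compact_open_simplices k X) euclideanreal f \<and> open U}"

definition quotient_topology :: "'b topology \<Rightarrow> ('b \<Rightarrow> 'c) \<Rightarrow> 'c topology" where
  "quotient_topology T q = topology (\<lambda>U. U \<subseteq> q ` topspace T \<and> openin T {x \<in> topspace T. q x \<in> U})"

text \<open>Homology classes are the cosets mu + B_k inside Z_k.\<close>
definition mt_class :: "nat \<Rightarrow> 'a topology \<Rightarrow> 'a mt_chain \<Rightarrow> 'a mt_chain set" where
  "mt_class k X \<mu> = {\<nu> \<in> mt_cycles k X. (\<lambda>A. \<nu> A - \<mu> A) \<in> mt_boundaries k X}"

definition mt_homology_berlanga :: "nat \<Rightarrow> 'a topology \<Rightarrow> 'a mt_chain set topology" where
  "mt_homology_berlanga k X =
     quotient_topology (subtopology (berlanga_chains k X) (mt_cycles k X)) (mt_class k X)"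

end

theory Submission
  imports Defs
begin

lemma fsbm_zero: "finite_signed_borel_measure T (\<lambda>A. 0)"
  by (simp add: finite_signed_borel_measure_def)

lemma fsbm_diff:
  assumes "finite_signed_borel_measure T \<mu>" "finite_signed_borel_measure T \<nu>"
  shows "finite_signed_borel_measure T (\<lambda>A. \<mu> A - \<nu> A)"
  using assms unfolding finite_signed_borel_measure_def by (auto intro: sums_diff)

lemma fsbm_add:
  assumes "finite_signed_borel_measure T \<mu>" "finite_signed_borel_measure T \<nu>"
  shows "finite_signed_borel_measure T (\<lambda>A. \<mu> A + \<nu> A)"
  using assms unfolding finite_signed_borel_measure_def by (auto intro: sums_add)

lemma hcc_zero: "has_compact_carrier T (\<lambda>A. 0)"
  unfolding has_compact_carrier_def by (rule exI[of _ "{}"]) auto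

lemma hcc_comb:
  assumes "has_compact_carrier T \<mu>" "has_compact_carrier T \<nu>"
  shows "has_compact_carrier T (\<lambda>A. \<mu> A - \<nu> A)" "has_compact_carrier T (\<lambda>A. \<mu> A + \<nu> A)"
proof -
  obtain K1 where K1: "compactin T K1" "\<forall>B \<in> borel_sets_of T. B \<inter> K1 = {} \<longrightarrow> \<mu> B = 0"
    using assms(1) unfolding has_compact_carrier_def by blast
  obtain K2 where K2: "compactin T K2" "\<forall>B \<in> borel_sets_of T. B \<inter> K2 = {} \<longrightarrow> \<nu> B = 0"
    using assms(2) unfolding has_compact_carrier_def by blast
  have c: "compactin T (K1 \<union> K2)" using K1 K2 compactin_Un by blast
  show "has_compact_carrier T (\<lambda>A. \<mu> A - \<nu> A)" "has_compact_carrier T (\<lambda>A. \<mu> A + \<nu> A)"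
    unfolding has_compact_carrier_def using K1 K2 c by (auto simp: Int_Un_distrib intro!: exI[of _ "K1 \<union> K2"])
qed

lemma mt_chains_zero: "(\<lambda>A. 0) \<in> mt_chains k X"
  by (simp add: mt_chains_def fsbm_zero hcc_zero)

lemma mt_chains_diff: "\<mu> \<in> mt_chains k X \<Longrightarrow> \<nu> \<in> mt_chains k X \<Longrightarrow> (\<lambda>A. \<mu> A - \<nu> A) \<in> mt_chains k X"
  by (simp add: mt_chains_def fsbm_diff hcc_comb)

lemma mt_chains_add: "\<mu> \<in> mt_chains k X \<Longrightarrow> \<nu> \<in> mt_chains k X \<Longrightarrow> (\<lambda>A. \<mu> A + \<nu> A) \<in> mt_chains k X"
  by (simp add: mt_chains_def fsbm_add hcc_comb)

lemma mt_boundary_diff: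
  "mt_boundary k X (\<lambda>A. \<mu> A - \<nu> A) = (\<lambda>A. mt_boundary k X \<mu> A - mt_boundary k X \<nu> A)"
  unfolding mt_boundary_def mt_face_def
  by (auto simp: sum_subtractf[symmetric] algebra_simps intro!: sum.cong)

lemma mt_boundary_add:
  "mt_boundary k X (\<lambda>A. \<mu> A + \<nu> A) = (\<lambda>A. mt_boundary k X \<mu> A + mt_boundary k X \<nu> A)"
  unfolding mt_boundary_def mt_face_def
  by (auto simp: sum.distrib[symmetric] algebra_simps intro!: sum.cong)

lemma mt_boundaries_diff:
  assumes "a \<in> mt_boundaries k X" "b \<in> mt_boundaries k X"
  shows "(\<lambda>A. a A - b A) \<in> mt_boundaries k X"
proof -
  obtain r s where "r \<in> mt_chains (Suc k) X" "s \<in> mt_chains (Suc k) X"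
    "a = mt_boundary (Suc k) X r" "b = mt_boundary (Suc k) X s"
    using assms unfolding mt_boundaries_def by blast
  then show ?thesis unfolding mt_boundaries_def
    by (auto simp: mt_boundary_diff intro!: image_eqI[of _ _ "\<lambda>A. r A - s A"] mt_chains_diff)
qed

lemma mt_boundaries_add:
  assumes "a \<in> mt_boundaries k X" "b \<in> mt_boundaries k X"
  shows "(\<lambda>A. a A + b A) \<in> mt_boundaries k X"
proof -
  obtain r s where "r \<in> mt_chains (Suc k) X" "s \<in> mt_chains (Suc k) X"
    "a = mt_boundary (Suc k) X r" "b = mt_boundary (Suc k) X s"
    using assms unfolding mt_boundaries_def by blast
  then show ?thesis unfolding mt_boundaries_def
    by (auto simp: mt_boundary_add intro!: image_eqI[of _ _ "\<lambda>A. r A + s A"] mt_chains_add)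
qed

lemma mt_boundaries_zero: "(\<lambda>A. 0) \<in> mt_boundaries k X"
proof -
  have "mt_boundary (Suc k) X (\<lambda>A. 0) = (\<lambda>A. 0)"
    unfolding mt_boundary_def mt_face_def by auto
  then show ?thesis unfolding mt_boundaries_def using mt_chains_zero by force
qed

lemma mt_class_boundary:
  assumes "\<beta> \<in> mt_boundaries k X"
  shows "mt_class k X \<beta> = mt_class k X (\<lambda>A. 0)"
proof -
  have "(\<lambda>A. x A - \<beta> A) \<in> mt_boundaries k X \<longleftrightarrow> x \<in> mt_boundaries k X" for x
  proof
    assume "(\<lambda>A. x A - \<beta> A) \<in> mt_boundaries k X"
    from mt_boundaries_add[OF this assms] show "x \<in> mt_boundaries k X" by simp
  next
    assume "x \<in> mt_boundaries k X"
    from mt_boundaries_diff[OF this assms] show "(\<lambda>A. x A - \<beta> A) \<in> mt_boundaries k X" .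
  qed
  then show ?thesis unfolding mt_class_def by auto
qed

lemma mt_class_self: "\<mu> \<in> mt_cycles k X \<Longrightarrow> \<mu> \<in> mt_class k X \<mu>"
  unfolding mt_class_def using mt_boundaries_zero by auto

lemma mt_class_zero_iff: "\<mu> \<in> mt_class k X (\<lambda>A. 0) \<longleftrightarrow> \<mu> \<in> mt_cycles k X \<and> \<mu> \<in> mt_boundaries k X"
  unfolding mt_class_def by auto

lemma istopology_quotient:
  "istopology (\<lambda>U. U \<subseteq> q ` topspace T \<and> openin T {x \<in> topspace T. q x \<in> U})"
  unfolding istopology_def
proof (rule conjI; intro allI impI)
  fix S U assume a: "S \<subseteq> q ` topspace T \<and> openin T {x \<in> topspace T. q x \<in> S}"
    "U \<subseteq> q ` topspace T \<and> openin T {x \<in> topspace T. q x \<in> U}"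
  have e: "{x \<in> topspace T. q x \<in> S \<inter> U} = {x \<in> topspace T. q x \<in> S} \<inter> {x \<in> topspace T. q x \<in> U}" by auto
  show "S \<inter> U \<subseteq> q ` topspace T \<and> openin T {x \<in> topspace T. q x \<in> S \<inter> U}"
    using a unfolding e by auto
next
  fix K assume a: "\<forall>S\<in>K. S \<subseteq> q ` topspace T \<and> openin T {x \<in> topspace T. q x \<in> S}"
  have e: "{x \<in> topspace T. q x \<in> \<Union>K} = (\<Union>S\<in>K. {x \<in> topspace T. q x \<in> S})" by auto
  show "\<Union>K \<subseteq> q ` topspace T \<and> openin T {x \<in> topspace T. q x \<in> \<Union>K}"
    using a unfolding e by auto
qed

lemma openin_quotient_topology:
  "openin (quotient_topology T q) U \<longleftrightarrow> U \<subseteq> q ` topspace T \<and> openin T {x \<in> topspace T. q x \<in> U}"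
  unfolding quotient_topology_def by (simp add: topology_inverse'[OF istopology_quotient])

lemma topspace_quotient_topology: "topspace (quotient_topology T q) = q ` topspace T"
proof -
  have "openin (quotient_topology T q) (q ` topspace T)"
    unfolding openin_quotient_topology by (auto intro: back_subst[where P="openin T", OF openin_topspace])
  then have "q ` topspace T \<subseteq> topspace (quotient_topology T q)" by (rule openin_subset)
  moreover have "topspace (quotient_topology T q) \<subseteq> q ` topspace T"
    unfolding topspace_def openin_quotient_topology by auto
  ultimately show ?thesis by blast
qed


lemma opens_Pow: "{S. openin T S} \<subseteq> Pow (topspace T)"
  using openin_subset by auto

lemma borel_open: "openin T S \<Longrightarrow> S \<in> borel_sets_of T"
  unfolding borel_sets_of_def by (auto intro: sigma_sets.Basic)

lemma borel_subset: "A \<in> borel_sets_of T \<Longrightarrow> A \<subseteq> topspace T"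
  unfolding borel_sets_of_def using sigma_sets_into_sp[OF opens_Pow] by blast

lemma borel_compl: "A \<in> borel_sets_of T \<Longrightarrow> topspace T - A \<in> borel_sets_of T"
  unfolding borel_sets_of_def by (rule sigma_sets.Compl)

lemma borel_empty: "{} \<in> borel_sets_of T"
  unfolding borel_sets_of_def by (rule sigma_sets.Empty)

lemma borel_topspace: "topspace T \<in> borel_sets_of T"
  using borel_compl[OF borel_empty] by simp

lemma borel_UN: "(\<And>i::nat. A i \<in> borel_sets_of T) \<Longrightarrow> (\<Union>i. A i) \<in> borel_sets_of T"
  unfolding borel_sets_of_def by (rule sigma_sets.Union)

lemma borel_Un: "A \<in> borel_sets_of T \<Longrightarrow> B \<in> borel_sets_of T \<Longrightarrow> A \<union> B \<in> borel_sets_of T"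
  unfolding borel_sets_of_def by (rule sigma_sets_Un)

lemma borel_Diff: "A \<in> borel_sets_of T \<Longrightarrow> B \<in> borel_sets_of T \<Longrightarrow> A - B \<in> borel_sets_of T"
proof -
  assume a: "A \<in> borel_sets_of T" "B \<in> borel_sets_of T"
  have "A - B = topspace T - ((topspace T - A) \<union> B)" using borel_subset[OF a(1)] by auto
  then show ?thesis using a by (simp add: borel_compl borel_Un)
qed

lemma borel_Int: "A \<in> borel_sets_of T \<Longrightarrow> B \<in> borel_sets_of T \<Longrightarrow> A \<inter> B \<in> borel_sets_of T"
proof -
  assume a: "A \<in> borel_sets_of T" "B \<in> borel_sets_of T"
  have "A \<inter> B = A - (topspace T - B)" using borel_subset[OF a(1)] by auto
  then show ?thesis using a by (simp add: borel_compl borel_Diff)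
qed

lemma sigma_borel: "sigma_sets (topspace T) (borel_sets_of T) = borel_sets_of T"
  unfolding borel_sets_of_def by (rule sigma_sets_sigma_sets_eq[OF opens_Pow])

definition borel_space :: "'b topology \<Rightarrow> 'b measure" where
  "borel_space T = measure_of (topspace T) {S. openin T S} (\<lambda>_. 0)"

lemma sets_borel_space[simp]: "sets (borel_space T) = borel_sets_of T"
  unfolding borel_space_def borel_sets_of_def by (rule sets_measure_of[OF opens_Pow])

lemma space_borel_space[simp]: "space (borel_space T) = topspace T"
  unfolding borel_space_def by (rule space_measure_of[OF opens_Pow])

lemma continuous_map_borel_measurable:
  assumes "continuous_map T euclideanreal f"
  shows "f \<in> borel_measurable (borel_space T)"
proof (rule borel_measurableI)
  fix S :: "real set" assume "open S"
  then have "openin T {x \<in> topspace T. f x \<in> S}"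
    using assms by (simp add: continuous_map_def)
  moreover have "f -` S \<inter> space (borel_space T) = {x \<in> topspace T. f x \<in> S}" by auto
  ultimately show "f -` S \<inter> space (borel_space T) \<in> sets (borel_space T)"
    by (simp add: borel_open)
qed

definition ptm :: "'b topology \<Rightarrow> (nat \<Rightarrow> 'b) \<Rightarrow> (nat \<Rightarrow> real) \<Rightarrow> 'b measure" where
  "ptm T P a = distr (density (count_space UNIV) (\<lambda>j. ennreal (a j))) (borel_space T) P"

lemma sets_ptm[simp]: "sets (ptm T P a) = borel_sets_of T"
  by (simp add: ptm_def)

lemma space_ptm[simp]: "space (ptm T P a) = topspace T"
  by (simp add: ptm_def)

lemma P_meas: "(\<And>j. P j \<in> topspace T) \<Longrightarrow> P \<in> measurable (density (count_space UNIV) (\<lambda>j. ennreal (a j))) (borel_space T)"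
  by (simp add: Pi_iff)

lemma emeasure_ptm:
  assumes P: "\<And>j. P j \<in> topspace T" and a: "\<And>j. 0 \<le> a j" "summable a"
    and A: "A \<in> borel_sets_of T"
  shows "emeasure (ptm T P a) A = ennreal (suminf (\<lambda>j. a j * indicator A (P j)))"
proof -
  have s: "summable (\<lambda>j. a j * indicator A (P j))"
    by (rule summable_comparison_test[OF _ a(2)]) (auto simp: a indicator_def)
  have "emeasure (ptm T P a) A = emeasure (density (count_space UNIV) (\<lambda>j. ennreal (a j))) (P -` A)"
    unfolding ptm_def using A by (subst emeasure_distr[OF P_meas[OF P]]) auto
  also have "\<dots> = (\<integral>\<^sup>+j. ennreal (a j) * indicator (P -` A) j \<partial>count_space UNIV)"
    by (subst emeasure_density) (auto simp: nn_integral_count_space_indicator)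
  also have "\<dots> = suminf (\<lambda>j. ennreal (a j * indicator A (P j)))"
    by (subst nn_integral_count_space_nat) (auto simp: indicator_def intro!: suminf_cong)
  also have "\<dots> = ennreal (suminf (\<lambda>j. a j * indicator A (P j)))"
    by (rule suminf_ennreal2) (auto simp: a s)
  finally show ?thesis .
qed

lemma finite_measure_ptm:
  assumes P: "\<And>j. P j \<in> topspace T" and a: "\<And>j. 0 \<le> a j" "summable a"
  shows "finite_measure (ptm T P a)"
  by (rule finite_measureI) (simp add: emeasure_ptm[OF P a borel_topspace])

lemma measure_ptm:
  assumes P: "\<And>j. P j \<in> topspace T" and a: "\<And>j. 0 \<le> a j" "summable a"
    and A: "A \<in> borel_sets_of T"
  shows "measure (ptm T P a) A = suminf (\<lambda>j. a j * indicator A (P j))"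
proof -
  have "0 \<le> suminf (\<lambda>j. a j * indicator A (P j))"
    by (rule suminf_nonneg) (auto intro: summable_comparison_test[OF _ a(2)] simp: a indicator_def)
  then show ?thesis unfolding measure_def using emeasure_ptm[OF P a A] by simp
qed

lemma integral_ptm:
  assumes P: "\<And>j. P j \<in> topspace T" and a: "\<And>j. 0 \<le> a j" "summable a"
    and f: "f \<in> borel_measurable (borel_space T)" and s: "summable (\<lambda>j. a j * \<bar>f (P j)\<bar>)"
  shows "integral\<^sup>L (ptm T P a) f = suminf (\<lambda>j. a j * f (P j))"
proof -
  have "integral\<^sup>L (ptm T P a) f = integral\<^sup>L (density (count_space UNIV) (\<lambda>j. ennreal (a j))) (\<lambda>j. f (P j))"
    unfolding ptm_def by (rule integral_distr[OF P_meas[OF P] f])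
  also have "\<dots> = integral\<^sup>L (count_space UNIV) (\<lambda>j. a j *\<^sub>R f (P j))"
    by (rule integral_density) (auto simp: a)
  also have "\<dots> = suminf (\<lambda>j. a j * f (P j))"
    by (subst integral_count_space_nat) (auto simp: integrable_count_space_nat_iff abs_mult a s)
  finally show ?thesis .
qed

lemma jordan_pos_eq:
  assumes M1: "finite_measure M1" "sets M1 = borel_sets_of T"
    and M2: "finite_measure M2" "sets M2 = borel_sets_of T" "space M2 = topspace T"
    and Z: "Z \<in> borel_sets_of T" "measure M1 Z = 0" "measure M2 (topspace T - Z) = 0"
    and A: "A \<in> borel_sets_of T"
  shows "jordan_pos T (\<lambda>A. if A \<in> borel_sets_of T then measure M1 A - measure M2 A else 0) A = measure M1 A"
  unfolding jordan_pos_def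
proof (rule cSup_eq_maximum)
  interpret m1: finite_measure M1 by fact
  interpret m2: finite_measure M2 by fact
  have AZ: "A - Z \<in> borel_sets_of T" using A Z by (simp add: borel_Diff)
  have "measure M1 (A \<inter> Z) \<le> measure M1 Z"
    by (rule m1.finite_measure_mono) (use A Z M1 in \<open>auto simp: borel_Int\<close>)
  then have "measure M1 (A \<inter> Z) = 0" using Z measure_nonneg[of M1 "A \<inter> Z"] by linarith
  moreover have "measure M1 ((A - Z) \<union> (A \<inter> Z)) = measure M1 (A - Z) + measure M1 (A \<inter> Z)"
    by (rule m1.finite_measure_Union) (use A Z M1 in \<open>auto simp: borel_Int borel_Diff\<close>)
  moreover have "(A - Z) \<union> (A \<inter> Z) = A" by auto
  ultimately have e1: "measure M1 (A - Z) = measure M1 A" by simp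
  have "measure M2 (A - Z) \<le> measure M2 (topspace T - Z)"
    by (rule m2.finite_measure_mono) (use borel_subset[OF A] Z M2 in \<open>auto simp: borel_compl\<close>)
  then have e2: "measure M2 (A - Z) = 0" using Z measure_nonneg[of M2 "A - Z"] by linarith
  show "measure M1 A \<in> (\<lambda>B. if B \<in> borel_sets_of T then measure M1 B - measure M2 B else 0) ` {B \<in> borel_sets_of T. B \<subseteq> A}"
    using AZ e1 e2 by (auto intro!: image_eqI[of _ _ "A - Z"])
  fix x assume "x \<in> (\<lambda>B. if B \<in> borel_sets_of T then measure M1 B - measure M2 B else 0) ` {B \<in> borel_sets_of T. B \<subseteq> A}"
  then obtain B where B: "B \<in> borel_sets_of T" "B \<subseteq> A" "x = measure M1 B - measure M2 B" by auto
  have "measure M1 B \<le> measure M1 A" using B A M1 by (intro m1.finite_measure_mono) auto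
  then show "x \<le> measure M1 A" using B measure_nonneg[of M2 B] by linarith
qed

lemma jordan_two:
  assumes M1: "finite_measure M1" "sets M1 = borel_sets_of T" "space M1 = topspace T"
    and M2: "finite_measure M2" "sets M2 = borel_sets_of T" "space M2 = topspace T"
    and Z: "Z \<in> borel_sets_of T" "measure M1 Z = 0" "measure M2 (topspace T - Z) = 0"
  defines "\<mu> \<equiv> (\<lambda>A. if A \<in> borel_sets_of T then measure M1 A - measure M2 A else 0)"
  shows "finite_signed_borel_measure T \<mu>"
    and "signed_integral T \<mu> f = integral\<^sup>L M1 f - integral\<^sup>L M2 f"
proof -
  interpret m1: finite_measure M1 by fact
  interpret m2: finite_measure M2 by fact
  show "finite_signed_borel_measure T \<mu>"
    unfolding finite_signed_borel_measure_def
  proof (intro conjI allI impI)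
    fix A :: "nat \<Rightarrow> _" assume A: "range A \<subseteq> borel_sets_of T" "disjoint_family A"
    have S: "(\<lambda>n. measure M1 (A n) - measure M2 (A n)) sums (measure M1 (\<Union>n. A n) - measure M2 (\<Union>n. A n))"
      by (intro sums_diff m1.finite_measure_UNION m2.finite_measure_UNION) (use A M1 M2 in auto)
    have U: "(\<Union>n. A n) \<in> borel_sets_of T" using A by (intro borel_UN) auto
    have E1: "(\<lambda>n. \<mu> (A n)) = (\<lambda>n. measure M1 (A n) - measure M2 (A n))"
      using A unfolding \<mu>_def by (intro ext) (simp add: image_subset_iff)
    have E2: "\<mu> (\<Union>n. A n) = measure M1 (\<Union>n. A n) - measure M2 (\<Union>n. A n)"
      using U unfolding \<mu>_def by simp
    show "(\<lambda>n. \<mu> (A n)) sums \<mu> (\<Union>n. A n)" unfolding E1 E2 by (rule S)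
  qed (auto simp: \<mu>_def)
  have Z2: "topspace T - Z \<in> borel_sets_of T" "measure M2 (topspace T - Z) = 0"
      "measure M1 (topspace T - (topspace T - Z)) = 0"
    using Z borel_subset[OF Z(1)] by (auto simp: borel_compl Diff_Diff_Int Int_absorb1)
  have neg: "(\<lambda>A. - \<mu> A) = (\<lambda>A. if A \<in> borel_sets_of T then measure M2 A - measure M1 A else 0)"
    unfolding \<mu>_def by auto
  have J1: "\<And>A. A \<in> borel_sets_of T \<Longrightarrow> jordan_pos T \<mu> A = measure M1 A"
    unfolding \<mu>_def by (rule jordan_pos_eq[OF M1(1,2) M2 Z])
  have J2: "\<And>A. A \<in> borel_sets_of T \<Longrightarrow> jordan_pos T (\<lambda>A. - \<mu> A) A = measure M2 A"
    unfolding neg by (rule jordan_pos_eq[OF M2(1,2) M1 Z2])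
  have E1: "measure_of_fun T (jordan_pos T \<mu>) = M1"
  proof -
    have "measure_of_fun T (jordan_pos T \<mu>) = measure_of (topspace T) (borel_sets_of T) (emeasure M1)"
      unfolding measure_of_fun_def
      by (rule measure_of_eq) (auto simp: sigma_borel J1 m1.emeasure_eq_measure dest: borel_subset)
    also have "\<dots> = M1" using measure_of_of_measure[of M1] M1 by simp
    finally show ?thesis .
  qed
  have E2: "measure_of_fun T (jordan_pos T (\<lambda>A. - \<mu> A)) = M2"
  proof -
    have "measure_of_fun T (jordan_pos T (\<lambda>A. - \<mu> A)) = measure_of (topspace T) (borel_sets_of T) (emeasure M2)"
      unfolding measure_of_fun_def
      by (rule measure_of_eq) (auto simp: sigma_borel J2 m2.emeasure_eq_measure dest: borel_subset)
    also have "\<dots> = M2" using measure_of_of_measure[of M2] M2 by simp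
    finally show ?thesis .
  qed
  show "signed_integral T \<mu> f = integral\<^sup>L M1 f - integral\<^sup>L M2 f"
    unfolding signed_integral_def E1 E2 ..
qed


abbreviation "PT \<equiv> powertop_real (UNIV :: nat set)"

lemma topspace_cos: "topspace (compact_open_simplices k X) = {\<sigma>. singular_simplex k X \<sigma>}"
proof -
  have "{\<sigma>. singular_simplex k X \<sigma> \<and> \<sigma> ` {} \<subseteq> topspace X} \<in>
     {{\<sigma>. singular_simplex k X \<sigma> \<and> \<sigma> ` K \<subseteq> U} | K U.
        compactin (subtopology PT (standard_simplex k)) K \<and> openin X U}"
    by blast
  then show ?thesis unfolding compact_open_simplices_def by auto
qed

lemma openin_cos_gen:
  assumes "compactin (subtopology PT (standard_simplex k)) K" "openin X U"
  shows "openin (compact_open_simplices k X) {\<sigma>. singular_simplex k X \<sigma> \<and> \<sigma> ` K \<subseteq> U}"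
  unfolding compact_open_simplices_def
  by (rule topology_generated_by_Basis) (use assms in blast)

lemma openin_cos_eval:
  assumes "v \<in> standard_simplex k" "openin X U"
  shows "openin (compact_open_simplices k X) {\<sigma> \<in> topspace (compact_open_simplices k X). \<sigma> v \<in> U}"
proof -
  have "compactin (subtopology PT (standard_simplex k)) {v}" using assms by simp
  from openin_cos_gen[OF this assms(2)] show ?thesis by (simp add: topspace_cos)
qed

lemma preimage_open_generated:
  assumes maps: "\<And>x. x \<in> topspace T1 \<Longrightarrow> h x \<in> topspace (topology_generated_by S)"
    and gen: "\<And>G. G \<in> S \<Longrightarrow> openin T1 {x \<in> topspace T1. h x \<in> G}"
    and Vo: "openin (topology_generated_by S) Vo"
  shows "openin T1 {x \<in> topspace T1. h x \<in> Vo}"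
proof -
  have "generate_topology_on S Vo" using Vo by (rule openin_topology_generated_by)
  then show ?thesis
  proof (induction rule: generate_topology_on.induct)
    case Empty then show ?case by simp
  next
    case (Int a b)
    have "{x \<in> topspace T1. h x \<in> a \<inter> b} = {x \<in> topspace T1. h x \<in> a} \<inter> {x \<in> topspace T1. h x \<in> b}" by auto
    then show ?case using Int by auto
  next
    case (UN K)
    have "{x \<in> topspace T1. h x \<in> \<Union>K} = (\<Union>k\<in>K. {x \<in> topspace T1. h x \<in> k})" by auto
    then show ?case using UN by auto
  next
    case (Basis s) then show ?case by (rule gen)
  qed
qed

lemma preimage_borel:
  assumes maps: "\<And>x. x \<in> topspace T1 \<Longrightarrow> h x \<in> topspace T2"
    and op: "\<And>Vo. openin T2 Vo \<Longrightarrow> openin T1 {x \<in> topspace T1. h x \<in> Vo}"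
    and A: "A \<in> borel_sets_of T2"
  shows "{x \<in> topspace T1. h x \<in> A} \<in> borel_sets_of T1"
  using A unfolding borel_sets_of_def
proof (induction rule: sigma_sets.induct)
  case (Basic a) then show ?case using op by (auto intro: sigma_sets.Basic)
next
  case Empty then show ?case by (simp add: sigma_sets.Empty)
next
  case (Compl a)
  have "{x \<in> topspace T1. h x \<in> topspace T2 - a} = topspace T1 - {x \<in> topspace T1. h x \<in> a}"
    using maps by auto
  then show ?case using Compl by (auto intro: sigma_sets.Compl)
next
  case (Union a)
  have "{x \<in> topspace T1. h x \<in> (\<Union>i. a i)} = (\<Union>i. {x \<in> topspace T1. h x \<in> a i})" by auto
  then show ?case using Union by (auto intro: sigma_sets.Union)
qed

lemma continuous_simplical_face:
  assumes "1 \<le> p" "k \<le> p"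
  shows "continuous_map (subtopology PT (standard_simplex (p - Suc 0)))
                          (subtopology PT (standard_simplex p)) (simplical_face k)"
proof -
  have 0: "simplical_face k \<in> standard_simplex (p - Suc 0) \<rightarrow> standard_simplex p"
    using assms simplical_face_in_standard_simplex by auto
  show ?thesis
  proof (clarsimp simp add: continuous_map_in_subtopology simplical_face_in_standard_simplex continuous_map_componentwise 0)
    fix i
    have "continuous_map PT euclideanreal (\<lambda>x. if i < k then x i else if i = k then 0 else x (i -1))"
      by (auto intro: continuous_map_product_projection)
    then show "continuous_map (subtopology PT (standard_simplex (p - Suc 0))) euclideanreal
                              (\<lambda>x. simplical_face k x i)"
      by (simp add: simplical_face_def continuous_map_from_subtopology)
  qed
qed

lemma face_preimage_open:
  assumes "1 \<le> p" "i \<le> p" "openin (compact_open_simplices (p - 1) X) Vo"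
  shows "openin (compact_open_simplices p X)
           {\<sigma> \<in> topspace (compact_open_simplices p X). singular_face p i \<sigma> \<in> Vo}"
proof -
  let ?S = "{{\<sigma>. singular_simplex (p-1) X \<sigma> \<and> \<sigma> ` K \<subseteq> U} | K U.
        compactin (subtopology PT (standard_simplex (p-1))) K \<and> openin X U}"
  have eqS: "topology_generated_by ?S = compact_open_simplices (p-1) X"
    by (simp add: compact_open_simplices_def)
  have "openin (compact_open_simplices p X) {\<sigma> \<in> topspace (compact_open_simplices p X). singular_face p i \<sigma> \<in> Vo}"
  proof (rule preimage_open_generated[where S="?S"])
    fix x assume "x \<in> topspace (compact_open_simplices p X)"
    then have "singular_simplex (p - 1) X (singular_face p i x)"
      using singular_simplex_singular_face[of p X x i] assms by (simp add: topspace_cos)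
    then show "singular_face p i x \<in> topspace (topology_generated_by ?S)"
      unfolding eqS topspace_cos by simp
  next
    fix G assume "G \<in> ?S"
    then obtain K U where G: "G = {\<sigma>. singular_simplex (p-1) X \<sigma> \<and> \<sigma> ` K \<subseteq> U}"
      and K: "compactin (subtopology PT (standard_simplex (p-1))) K" and U: "openin X U" by blast
    have Ks: "K \<subseteq> standard_simplex (p-1)" using compactin_subset_topspace[OF K] by simp
    have K': "compactin (subtopology PT (standard_simplex p)) (simplical_face i ` K)"
      using image_compactin[OF _ continuous_simplical_face[OF assms(1,2)], of K] K by simp
    have "{\<sigma> \<in> topspace (compact_open_simplices p X). singular_face p i \<sigma> \<in> G}
          = {\<sigma>. singular_simplex p X \<sigma> \<and> \<sigma> ` (simplical_face i ` K) \<subseteq> U}"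
      using singular_simplex_singular_face[of p X _ i] assms Ks
      by (auto simp: G topspace_cos singular_face_def image_subset_iff)
    then show "openin (compact_open_simplices p X) {\<sigma> \<in> topspace (compact_open_simplices p X). singular_face p i \<sigma> \<in> G}"
      using openin_cos_gen[OF K' U] by simp
  qed (use assms eqS in simp)
  then show ?thesis .
qed

lemma face_preimage_borel:
  assumes "1 \<le> p" "i \<le> p" "A \<in> borel_sets_of (compact_open_simplices (p - 1) X)"
  shows "{\<sigma> \<in> topspace (compact_open_simplices p X). singular_face p i \<sigma> \<in> A}
           \<in> borel_sets_of (compact_open_simplices p X)"
  by (rule preimage_borel[OF _ face_preimage_open[OF assms(1,2)] assms(3)])
     (use singular_simplex_singular_face assms in \<open>auto simp: topspace_cos\<close>)


definition cut :: "nat \<Rightarrow> real" where "cut k = 1 / (2 * pi * (real k + 1))"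

definition Lset :: "nat \<Rightarrow> (real \<times> real) set" where
  "Lset k = {(x, sin (1 / x)) | x. 0 < x \<and> x < cut k}"

definition lev :: "real \<times> real \<Rightarrow> nat" where
  "lev u = (LEAST k. u \<notin> Lset k)"

lemma cut_pos: "0 < cut k"
  by (simp add: cut_def)

lemma cut_mono: "k \<le> m \<Longrightarrow> cut m \<le> cut k"
  unfolding cut_def by (auto intro!: divide_left_mono mult_pos_pos)

lemma cut_le0: "cut k \<le> 1 / (2 * pi)"
  using cut_mono[of 0 k] by (simp add: cut_def)

lemma cut_lt_xmin: "cut k < warsaw_xmin"
proof -
  have "1 / (2 * pi) < 2 / (3 * pi)" by (simp add: field_simps)
  then show ?thesis using cut_le0[of k] by (simp add: warsaw_xmin_def)
qed

lemma Lset_mono: "k \<le> m \<Longrightarrow> Lset m \<subseteq> Lset k"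
  unfolding Lset_def using cut_mono by fastforce

lemma Lset_elem: "u \<in> Lset k \<longleftrightarrow> 0 < fst u \<and> fst u < cut k \<and> snd u = sin (1 / fst u)"
  unfolding Lset_def by (cases u) auto

lemma ex_notin_Lset: "\<exists>k. u \<notin> Lset k"
proof (cases "0 < fst u")
  case True
  obtain n :: nat where n: "1 / (2 * pi * fst u) < real n" using reals_Archimedean2 by blast
  have "cut n < fst u"
  proof -
    have "1 / (2 * pi * fst u) < real n + 1" using n by simp
    then have "1 < (real n + 1) * (2 * pi * fst u)" using True by (simp add: field_simps)
    moreover have e: "fst u * (2 * pi * (real n + 1)) = (real n + 1) * (2 * pi * fst u)" by (simp add: algebra_simps)
    ultimately have l: "1 < fst u * (2 * pi * (real n + 1))" by linarith
    have d: "0 < 2 * pi * (real n + 1)" by simp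
    have "1 / (2 * pi * (real n + 1)) < fst u"
      by (subst pos_divide_less_eq[OF d]) (rule l)
    then show ?thesis unfolding cut_def .
  qed
  then have "u \<notin> Lset n" using Lset_elem[of u n] by simp
  then show ?thesis by blast
next
  case False then show ?thesis using Lset_elem by auto
qed

lemma lev_iff: "u \<in> Lset k \<longleftrightarrow> k < lev u"
proof
  assume "u \<in> Lset k"
  show "k < lev u"
  proof (rule ccontr)
    assume "\<not> k < lev u"
    then have "Lset k \<subseteq> Lset (lev u)" by (intro Lset_mono) simp
    moreover have "u \<notin> Lset (lev u)" unfolding lev_def
      by (rule LeastI_ex) (rule ex_notin_Lset)
    ultimately show False using \<open>u \<in> Lset k\<close> by blast
  qed
next
  assume "k < lev u" then show "u \<in> Lset k" unfolding lev_def using not_less_Least by blast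
qed

lemma sin_shift: "sin (x + 2 * pi * real m) = sin x"
proof (induction m)
  case (Suc m)
  have "sin (x + 2 * pi * real (Suc m)) = sin ((x + 2 * pi * real m) + 2 * pi)" by (simp add: algebra_simps)
  also have "\<dots> = sin (x + 2 * pi * real m)" by (rule sin_periodic)
  finally show ?case using Suc by simp
qed simp

lemma sin_peak: "sin (2 * pi * real m + pi / 2) = 1"
  using sin_shift[of "pi/2" m] by (simp add: add.commute)

lemma sin_trough: "sin (2 * pi * real m + 3 * pi / 2) = -1"
proof -
  have "sin (3 * pi / 2) = -1" using sin_periodic_pi2[of "pi/2"] by (simp add: field_simps)
  then show ?thesis using sin_shift[of "3*pi/2" m] by (simp add: add.commute)
qed

lemma limit_left:
  fixes f :: "real \<Rightarrow> 'b::topological_space"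
  assumes "continuous_on {a..c} f" "a < c" "closed C" "\<And>t. a \<le> t \<Longrightarrow> t < c \<Longrightarrow> f t \<in> C"
  shows "f c \<in> C"
proof -
  have cl: "closed ({a..c} \<inter> f -` C)"
    by (rule continuous_closed_preimage) (use assms in auto)
  have "{a..<c} \<subseteq> {a..c} \<inter> f -` C" using assms(4) by auto
  then have "closure {a..<c} \<subseteq> {a..c} \<inter> f -` C" using cl by (rule closure_minimal)
  then have "{a..c} \<subseteq> f -` C" using assms(2) by simp
  moreover have "c \<in> {a..c}" using assms(2) by simp
  ultimately show ?thesis by blast
qed

lemma barrier_core:
  fixes \<gamma> :: "real \<Rightarrow> real \<times> real"
  assumes cont: "continuous_on {a..b} \<gamma>" and img: "\<gamma> ` {a..b} \<subseteq> W" and ab: "a \<le> b"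
    and Op: "open Op" "Lset k = W \<inter> Op"
    and ga: "\<gamma> a \<in> Lset k" and gb: "\<gamma> b \<notin> Lset k"
  shows "(\<forall>s. 0 < s \<and> s < fst (\<gamma> a) \<longrightarrow> (\<exists>t\<in>{a..b}. snd (\<gamma> t) = sin (1 / s)))
       \<or> (\<forall>s. fst (\<gamma> a) \<le> s \<and> s < cut k \<longrightarrow> (\<exists>t\<in>{a..b}. snd (\<gamma> t) = sin (1 / s)))"
proof -
  define S where "S = {t \<in> {a..b}. \<gamma> t \<notin> Lset k}"
  define \<tau> where "\<tau> = Inf S"
  have bS: "b \<in> S" using gb ab by (simp add: S_def)
  have bdd: "bdd_below S" unfolding S_def by (rule bdd_belowI[of _ a]) auto
  have tau_le: "\<tau> \<le> b" unfolding \<tau>_def using bS bdd by (rule cInf_lower)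
  have tau_ge: "a \<le> \<tau>" unfolding \<tau>_def using bS by (intro cInf_greatest) (auto simp: S_def)
  have before: "\<gamma> t \<in> Lset k" if "a \<le> t" "t < \<tau>" for t
  proof (rule ccontr)
    assume "\<gamma> t \<notin> Lset k"
    then have "t \<in> S" using that tau_le by (simp add: S_def)
    then have "\<tau> \<le> t" unfolding \<tau>_def using bdd by (rule cInf_lower)
    then show False using that by simp
  qed
  have not_tau: "\<gamma> \<tau> \<notin> Lset k"
  proof
    assume "\<gamma> \<tau> \<in> Lset k"
    then have "\<gamma> \<tau> \<in> Op" using Op by auto
    then obtain r where r: "r > 0" "ball (\<gamma> \<tau>) r \<subseteq> Op" using Op(1) open_contains_ball by blast
    obtain d where d: "d > 0" "\<And>t. t \<in> {a..b} \<Longrightarrow> dist t \<tau> < d \<Longrightarrow> dist (\<gamma> t) (\<gamma> \<tau>) < r"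
      using cont tau_ge tau_le r(1) unfolding continuous_on_iff by (metis atLeastAtMost_iff)
    have "\<tau> + d \<le> \<tau>" unfolding \<tau>_def
    proof (rule cInf_greatest)
      show "S \<noteq> {}" using bS by auto
      fix t assume t: "t \<in> S"
      show "Inf S + d \<le> t"
      proof (rule ccontr)
        assume "\<not> Inf S + d \<le> t"
        then have lt: "t < \<tau> + d" by (simp add: \<tau>_def)
        have tab: "t \<in> {a..b}" and nt: "\<gamma> t \<notin> Lset k" using t by (auto simp: S_def)
        show False
        proof (cases "t < \<tau>")
          case True then show False using before tab nt by auto
        next
          case False
          then have "dist t \<tau> < d" using lt by (simp add: dist_real_def)
          then have "\<gamma> t \<in> Op" using d(2)[OF tab] r(2) by (auto simp: dist_commute)
          moreover have "\<gamma> t \<in> W" using img tab by auto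
          ultimately show False using nt Op by auto
        qed
      qed
    qed
    then show False using d by simp
  qed
  have a_tau: "a < \<tau>" using tau_ge not_tau ga by (cases "a = \<tau>") auto
  define h where "h = (\<lambda>t. fst (\<gamma> t))"
  have hc: "continuous_on {a..\<tau>} h" unfolding h_def
    by (intro continuous_intros continuous_on_subset[OF cont]) (use tau_le in auto)
  have bef: "0 < h t \<and> h t < cut k \<and> snd (\<gamma> t) = sin (1 / h t)" if "a \<le> t" "t < \<tau>" for t
    using before[OF that] unfolding Lset_elem h_def by auto
  have h_tau: "h \<tau> \<in> {0..cut k}"
    by (rule limit_left[OF hc a_tau]) (use bef in \<open>auto intro: less_imp_le\<close>)
  have ivt: "\<exists>t\<in>{a..b}. snd (\<gamma> t) = sin (1 / s)" if s: "s \<noteq> h \<tau>" "(h \<tau> \<le> s \<and> s \<le> h a) \<or> (h a \<le> s \<and> s \<le> h \<tau>)" for s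
  proof -
    obtain t where t: "t \<in> {a..\<tau>}" "h t = s"
      using s(2) IVT'[of h a s \<tau>] IVT2'[of h \<tau> s a] hc a_tau by auto
    then have "t \<noteq> \<tau>" using s(1) by auto
    then have "t < \<tau>" using t by auto
    then have "snd (\<gamma> t) = sin (1 / s)" using bef[of t] t by auto
    then show ?thesis using t tau_le by auto
  qed
  consider "h \<tau> = 0" | "h \<tau> = cut k" | "0 < h \<tau> \<and> h \<tau> < cut k" using h_tau by fastforce
  then show ?thesis
  proof cases
    case 1
    have "\<forall>s. 0 < s \<and> s < fst (\<gamma> a) \<longrightarrow> (\<exists>t\<in>{a..b}. snd (\<gamma> t) = sin (1 / s))"
      using ivt 1 by (auto simp: h_def)
    then show ?thesis by blast
  next
    case 2
    have "\<forall>s. fst (\<gamma> a) \<le> s \<and> s < cut k \<longrightarrow> (\<exists>t\<in>{a..b}. snd (\<gamma> t) = sin (1 / s))"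
      using ivt 2 by (auto simp: h_def)
    then show ?thesis by blast
  next
    case 3
    have pos: "\<And>t. t \<in> {a..\<tau>} \<Longrightarrow> 0 < h t"
      using bef 3 by (metis atLeastAtMost_iff order_le_less)
    have hnz: "\<And>t. t \<in> {a..\<tau>} \<Longrightarrow> h t \<noteq> 0" using pos by force
    have c2: "continuous_on {a..\<tau>} (\<lambda>t. snd (\<gamma> t) - sin (1 / h t))"
      using hnz by (intro continuous_intros continuous_on_subset[OF cont] hc) (use tau_le hnz in auto)
    have "snd (\<gamma> \<tau>) - sin (1 / h \<tau>) \<in> {0}"
      by (rule limit_left[OF c2 a_tau]) (use bef in auto)
    then have "\<gamma> \<tau> \<in> Lset k" using 3 unfolding Lset_elem h_def by auto
    then show ?thesis using not_tau by simp
  qed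
qed


lemma barrier_offset:
  fixes \<gamma> :: "real \<Rightarrow> real \<times> real"
  assumes cont: "continuous_on {a..b} \<gamma>" and img: "\<gamma> ` {a..b} \<subseteq> W" and ab: "a \<le> b"
    and Op: "open Op" "Lset k = W \<inter> Op"
    and ga: "\<gamma> a \<in> Lset (Suc k)" and gb: "\<gamma> b \<notin> Lset k"
    and c: "0 < c" "c < 2 * pi" "\<And>m::nat. sin (2 * pi * real m + c) = v"
  shows "\<exists>t\<in>{a..b}. snd (\<gamma> t) = v"
proof -
  have ga': "\<gamma> a \<in> Lset k" using ga Lset_mono[of k "Suc k"] by auto
  define x where "x = fst (\<gamma> a)"
  have x: "0 < x" "x < cut (Suc k)" using ga unfolding Lset_elem x_def by auto
  from barrier_core[OF cont img ab Op ga' gb]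
  show ?thesis
  proof
    assume D: "\<forall>s. 0 < s \<and> s < fst (\<gamma> a) \<longrightarrow> (\<exists>t\<in>{a..b}. snd (\<gamma> t) = sin (1 / s))"
    obtain m :: nat where m: "1 / x < real m" using reals_Archimedean2 by blast
    have pm: "0 < 2 * pi * real m + c" using c by (simp add: add_nonneg_pos)
    have "real m \<le> 2 * pi * real m" using pi_gt3 mult_right_mono[of 1 "2*pi" "real m"] by simp
    then have lt: "1 / x < 2 * pi * real m + c" using m c by linarith
    define s where "s = 1 / (2 * pi * real m + c)"
    have s0: "0 < s" using pm by (simp add: s_def)
    have "s < x" unfolding s_def using lt x(1) pm
      by (metis divide_less_eq_1 divide_divide_eq_right divide_less_eq mult.commute mult_1)
    then obtain t where "t \<in> {a..b}" "snd (\<gamma> t) = sin (1 / s)" using D s0 by (auto simp: x_def)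
    moreover have "1 / s = 2 * pi * real m + c" by (simp add: s_def)
    ultimately show ?thesis using c(3) by auto
  next
    assume D: "\<forall>s. fst (\<gamma> a) \<le> s \<and> s < cut k \<longrightarrow> (\<exists>t\<in>{a..b}. snd (\<gamma> t) = sin (1 / s))"
    define s where "s = 1 / (2 * pi * real (Suc k) + c)"
    have p1: "0 < 2 * pi * real (Suc k)" by simp
    have p2: "0 < 2 * pi * real (Suc k) + c" using c p1 by linarith
    define A where "A = 2 * pi * real (Suc k)"
    have A0: "0 < A" using p1 by (simp add: A_def)
    have ck: "cut k = 1 / A" by (simp add: cut_def A_def add.commute)
    have ck1: "cut (Suc k) = 1 / (A + 2 * pi)" by (simp add: cut_def A_def algebra_simps)
    have sA: "s = 1 / (A + c)" by (simp add: s_def A_def)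
    have "s < cut k" unfolding sA ck
      by (rule divide_strict_left_mono) (use A0 c in \<open>auto intro!: mult_pos_pos\<close>)
    moreover have "cut (Suc k) < s" unfolding sA ck1
      by (rule divide_strict_left_mono) (use A0 c in \<open>auto intro!: mult_pos_pos\<close>)
    ultimately have "fst (\<gamma> a) \<le> s \<and> s < cut k" using x unfolding x_def by linarith
    then obtain t where "t \<in> {a..b}" "snd (\<gamma> t) = sin (1 / s)" using D by blast
    moreover have "1 / s = 2 * pi * real (Suc k) + c" by (simp add: s_def)
    ultimately have "snd (\<gamma> t) = v" using c(3)[of "Suc k"] by simp
    then show ?thesis using \<open>t \<in> {a..b}\<close> by blast
  qed
qed

lemma barrier:
  fixes \<gamma> :: "real \<Rightarrow> real \<times> real"
  assumes cont: "continuous_on {a..b} \<gamma>" and img: "\<gamma> ` {a..b} \<subseteq> W" and ab: "a \<le> b"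
    and Op: "open Op" "Lset k = W \<inter> Op"
    and ga: "\<gamma> a \<in> Lset (Suc k)" and gb: "\<gamma> b \<notin> Lset k"
  shows "(\<exists>t\<in>{a..b}. snd (\<gamma> t) = 1) \<and> (\<exists>t\<in>{a..b}. snd (\<gamma> t) = -1)"
proof
  show "\<exists>t\<in>{a..b}. snd (\<gamma> t) = 1"
    by (rule barrier_offset[OF assms, of "pi/2"]) (auto simp: sin_peak)
  show "\<exists>t\<in>{a..b}. snd (\<gamma> t) = -1"
    by (rule barrier_offset[OF assms, of "3*pi/2"]) (auto simp: sin_trough)
qed

lemma piece_one:
  fixes \<gamma> :: "real \<Rightarrow> real \<times> real"
  assumes cont: "continuous_on {a..b} \<gamma>" and img: "\<gamma> ` {a..b} \<subseteq> W" and ab: "a \<le> b"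
    and Op: "\<And>k. \<exists>Op. open Op \<and> Lset k = W \<inter> Op"
    and y: "(\<forall>t\<in>{a..b}. snd (\<gamma> t) \<noteq> 1) \<or> (\<forall>t\<in>{a..b}. snd (\<gamma> t) \<noteq> -1)"
  shows "lev (\<gamma> a) \<le> Suc (lev (\<gamma> b))"
proof (rule ccontr)
  assume "\<not> lev (\<gamma> a) \<le> Suc (lev (\<gamma> b))"
  then have "\<gamma> a \<in> Lset (Suc (lev (\<gamma> b)))" "\<gamma> b \<notin> Lset (lev (\<gamma> b))" by (auto simp: lev_iff)
  moreover obtain Op where "open Op" "Lset (lev (\<gamma> b)) = W \<inter> Op" using Op by blast
  ultimately show False using barrier[OF cont img ab] y by blast
qed

lemma piece:
  fixes \<gamma> :: "real \<Rightarrow> real \<times> real"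
  assumes cont: "continuous_on {a..b} \<gamma>" and img: "\<gamma> ` {a..b} \<subseteq> W" and ab: "a \<le> b"
    and Op: "\<And>k. \<exists>Op. open Op \<and> Lset k = W \<inter> Op"
    and y: "(\<forall>t\<in>{a..b}. snd (\<gamma> t) \<noteq> 1) \<or> (\<forall>t\<in>{a..b}. snd (\<gamma> t) \<noteq> -1)"
  shows "lev (\<gamma> a) \<le> Suc (lev (\<gamma> b)) \<and> lev (\<gamma> b) \<le> Suc (lev (\<gamma> a))"
proof
  show "lev (\<gamma> a) \<le> Suc (lev (\<gamma> b))" by (rule piece_one[OF assms])
  define \<delta> where "\<delta> = (\<lambda>t. \<gamma> (a + b - t))"
  have r: "(\<lambda>t. a + b - t) ` {a..b} = {a..b}"
  proof
    show "(\<lambda>t. a + b - t) ` {a..b} \<subseteq> {a..b}" by auto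
    show "{a..b} \<subseteq> (\<lambda>t. a + b - t) ` {a..b}"
    proof
      fix t assume "t \<in> {a..b}" then show "t \<in> (\<lambda>t. a + b - t) ` {a..b}"
        by (intro image_eqI[of _ _ "a + b - t"]) auto
    qed
  qed
  have c2: "continuous_on {a..b} \<delta>" unfolding \<delta>_def
    by (rule continuous_on_compose2[OF cont]) (auto intro!: continuous_intros)
  have i2: "\<delta> ` {a..b} \<subseteq> W" using img r unfolding \<delta>_def by auto
  have y2: "(\<forall>t\<in>{a..b}. snd (\<delta> t) \<noteq> 1) \<or> (\<forall>t\<in>{a..b}. snd (\<delta> t) \<noteq> -1)"
    using y unfolding \<delta>_def by auto
  have "lev (\<delta> a) \<le> Suc (lev (\<delta> b))" by (rule piece_one[OF c2 i2 ab Op y2])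
  then show "lev (\<gamma> b) \<le> Suc (lev (\<gamma> a))" by (simp add: \<delta>_def)
qed

lemma chain_lev:
  fixes \<gamma> :: "real \<Rightarrow> real \<times> real"
  assumes cont: "continuous_on {0..1} \<gamma>" and img: "\<gamma> ` {0..1} \<subseteq> W" and n: "0 < n"
    and Op: "\<And>k. \<exists>Op. open Op \<and> Lset k = W \<inter> Op"
    and y: "\<And>i. i < n \<Longrightarrow> (\<forall>t\<in>{real i / real n..real (Suc i) / real n}. snd (\<gamma> t) \<noteq> 1)
                       \<or> (\<forall>t\<in>{real i / real n..real (Suc i) / real n}. snd (\<gamma> t) \<noteq> -1)"
  shows "lev (\<gamma> 0) \<le> lev (\<gamma> 1) + n \<and> lev (\<gamma> 1) \<le> lev (\<gamma> 0) + n"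
proof -
  have "i \<le> n \<Longrightarrow> lev (\<gamma> 0) \<le> lev (\<gamma> (real i / real n)) + i \<and> lev (\<gamma> (real i / real n)) \<le> lev (\<gamma> 0) + i" for i
  proof (induction i)
    case 0 then show ?case by simp
  next
    case (Suc i)
    have le: "real i / real n \<le> real (Suc i) / real n" using n by (simp add: divide_right_mono)
    have sub: "{real i / real n..real (Suc i) / real n} \<subseteq> {0..1}"
      using Suc.prems n by (auto simp: field_simps)
    have "lev (\<gamma> (real i / real n)) \<le> Suc (lev (\<gamma> (real (Suc i) / real n))) \<and>
          lev (\<gamma> (real (Suc i) / real n)) \<le> Suc (lev (\<gamma> (real i / real n)))"
      by (rule piece[OF continuous_on_subset[OF cont sub] _ le Op y]) (use image_mono[OF sub, of \<gamma>] img Suc.prems in auto)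
    then show ?case using Suc by auto
  qed
  from this[of n] show ?thesis using n by simp
qed


locale warsaw =
  fixes g :: "real \<Rightarrow> real \<times> real"
  assumes arc: "arc g"
    and ps: "pathstart g = (0, -1)"
    and pf: "pathfinish g = (warsaw_xmin, -1)"
    and gi: "path_image g \<inter> (warsaw_sine_part \<union> warsaw_segment) = {(0, -1), (warsaw_xmin, -1)}"
begin

abbreviation "WW \<equiv> warsaw_sine_part \<union> warsaw_segment \<union> path_image g"
abbreviation "XX \<equiv> subtopology euclidean WW"

lemma Lset_sine: "Lset k \<subseteq> warsaw_sine_part"
  unfolding Lset_def warsaw_sine_part_def using cut_lt_xmin[of k] by fastforce

lemma Lset_W: "Lset k \<subseteq> WW" using Lset_sine by auto

lemma Lset_open: "\<exists>Op. open Op \<and> Lset k = WW \<inter> Op"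
proof (intro exI conjI)
  let ?Op = "{p. 0 < fst p \<and> fst p < cut k} - path_image g"
  have "open {p::real\<times>real. 0 < fst p \<and> fst p < cut k}"
    by (intro open_Collect_conj open_Collect_less continuous_intros)
  moreover have "closed (path_image g)"
    using arc by (intro compact_imp_closed compact_path_image arc_imp_path)
  ultimately show "open ?Op" by (rule open_Diff)
  show "Lset k = WW \<inter> ?Op"
  proof
    show "Lset k \<subseteq> WW \<inter> ?Op"
    proof
      fix u assume u: "u \<in> Lset k"
      then have u2: "0 < fst u" "fst u < cut k" using Lset_elem by auto
      have "u \<notin> path_image g"
      proof
        assume "u \<in> path_image g"
        then have "u \<in> {(0, -1), (warsaw_xmin, -1)}" using gi Lset_sine u by blast
        then show False using u2 cut_lt_xmin[of k] by auto
      qed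
      then show "u \<in> WW \<inter> ?Op" using u u2 Lset_W by auto
    qed
    show "WW \<inter> ?Op \<subseteq> Lset k"
    proof
      fix u assume u: "u \<in> WW \<inter> ?Op"
      then have "u \<in> warsaw_sine_part \<union> warsaw_segment" by auto
      moreover have "u \<notin> warsaw_segment" using u unfolding warsaw_segment_def by auto
      ultimately have "u \<in> warsaw_sine_part" by blast
      then show "u \<in> Lset k" using u unfolding warsaw_sine_part_def Lset_elem by auto
    qed
  qed
qed

lemma Lset_openin: "openin XX (Lset k)"
  using Lset_open[of k] by (auto simp: openin_subtopology Int_commute)

end

definition pth :: "real \<Rightarrow> nat \<Rightarrow> real" where
  "pth t = (\<lambda>i. if i = 0 then 1 - t else if i = 1 then t else 0)"

definition vtx :: "nat \<Rightarrow> nat \<Rightarrow> real" where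
  "vtx j = (\<lambda>i. if i = j then 1 else 0)"

lemma pth0: "pth 0 = vtx 0" and pth1: "pth 1 = vtx 1"
  by (auto simp: pth_def vtx_def)

lemma pth_simplex: "t \<in> {0..1} \<Longrightarrow> pth t \<in> standard_simplex 1"
  unfolding standard_simplex_def pth_def by auto

lemma vtx_simplex: "vtx 0 \<in> standard_simplex 1" "vtx 1 \<in> standard_simplex 1"
  using pth_simplex[of 0] pth_simplex[of 1] by (auto simp: pth0 pth1)

lemma pth_cont: "continuous_map euclideanreal PT pth"
  unfolding continuous_map_componentwise_UNIV
proof
  fix k :: nat
  consider "k = 0" | "k = 1" | "k \<noteq> 0 \<and> k \<noteq> 1" by blast
  then show "continuous_map euclideanreal euclideanreal (\<lambda>x. pth x k)"
  proof cases
    case 1 then show ?thesis by (simp add: pth_def continuous_intros)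
  next
    case 2 then show ?thesis by (simp add: pth_def continuous_intros)
  next
    case 3 then show ?thesis by (simp add: pth_def)
  qed
qed

lemma pth_cont_sub: "continuous_map (top_of_set {0..1}) (subtopology PT (standard_simplex 1)) pth"
  using pth_cont pth_simplex
  by (auto simp: continuous_map_in_subtopology intro: continuous_map_from_subtopology)

lemma path_of_simplex:
  assumes "singular_simplex 1 (subtopology euclidean W) \<sigma>"
  shows "continuous_on {0..1} (\<lambda>t. \<sigma> (pth t))" "(\<lambda>t. \<sigma> (pth t)) ` {0..1} \<subseteq> W"
proof -
  have "continuous_map (top_of_set {0..1}) (subtopology euclidean W) (\<sigma> \<circ> pth)"
    using assms pth_cont_sub unfolding singular_simplex_def by (blast intro: continuous_map_compose)
  then show "continuous_on {0..1} (\<lambda>t. \<sigma> (pth t))" "(\<lambda>t. \<sigma> (pth t)) ` {0..1} \<subseteq> W"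
    by (auto simp: o_def)
qed

lemma pth_compactin:
  assumes "a \<le> b" "{a..b} \<subseteq> {0..1}"
  shows "compactin (subtopology PT (standard_simplex 1)) (pth ` {a..b})"
proof -
  have "compactin PT (pth ` {a..b})"
    by (rule image_compactin[OF _ pth_cont]) simp
  then show ?thesis using assms pth_simplex by (auto simp: compactin_subtopology)
qed

context warsaw begin

lemma local_bound:
  assumes "\<sigma> \<in> topspace (compact_open_simplices 1 XX)"
  shows "\<exists>N n. openin (compact_open_simplices 1 XX) N \<and> \<sigma> \<in> N \<and>
     (\<forall>\<sigma>'\<in>N. lev (\<sigma>' (vtx 0)) \<le> lev (\<sigma>' (vtx 1)) + n \<and> lev (\<sigma>' (vtx 1)) \<le> lev (\<sigma>' (vtx 0)) + n)"
proof -
  have ss: "singular_simplex 1 XX \<sigma>" using assms by (simp add: topspace_cos)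
  define y where "y = (\<lambda>t. snd (\<sigma> (pth t)))"
  have yc: "continuous_on {0..1} y" unfolding y_def
    by (intro continuous_intros path_of_simplex[OF ss])
  have "uniformly_continuous_on {0..1} y" by (rule compact_uniformly_continuous[OF yc]) simp
  then obtain d where d: "d > 0" "\<And>x x'. x \<in> {0..1} \<Longrightarrow> x' \<in> {0..1} \<Longrightarrow> dist x' x < d \<Longrightarrow> dist (y x') (y x) < 1"
    unfolding uniformly_continuous_on_def by (metis zero_less_one)
  obtain n :: nat where n: "1 / d < real n" using reals_Archimedean2 by blast
  have n0: "0 < n" using n d by (cases n) (auto simp: field_simps)
  have nd: "1 / real n < d" using n d n0 by (simp add: field_simps)
  define I where "I = (\<lambda>i::nat. {real i / real n .. real (Suc i) / real n})"
  have Isub: "I i \<subseteq> {0..1}" if "i < n" for i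
    using that n0 by (auto simp: I_def field_simps)
  have Ile: "real i / real n \<le> real (Suc i) / real n" for i
    using n0 by (simp add: divide_right_mono)
  define c where "c = (\<lambda>i. y (real i / real n))"
  define U where "U = (\<lambda>i. {u \<in> WW. \<bar>snd u - c i\<bar> < 1})"
  define G where "G = (\<lambda>i. {\<sigma>'. singular_simplex 1 XX \<sigma>' \<and> \<sigma>' ` (pth ` I i) \<subseteq> U i})"
  define N where "N = \<Inter> (G ` {..<n})"
  have Uo: "openin XX (U i)" for i
  proof -
    have "open {u::real\<times>real. \<bar>snd u - c i\<bar> < 1}"
      by (intro open_Collect_less continuous_intros)
    moreover have "U i = {u::real\<times>real. \<bar>snd u - c i\<bar> < 1} \<inter> WW" by (auto simp: U_def)
    ultimately show ?thesis by (auto simp: openin_subtopology)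
  qed
  have Go: "openin (compact_open_simplices 1 XX) (G i)" if "i < n" for i
  proof -
    have "compactin (subtopology PT (standard_simplex 1)) (pth ` I i)"
      using pth_compactin[OF Ile[of i]] Isub[OF that] by (simp add: I_def)
    then show ?thesis unfolding G_def by (rule openin_cos_gen[OF _ Uo])
  qed
  have No: "openin (compact_open_simplices 1 XX) N"
    unfolding N_def using n0 Go by (intro openin_Inter) auto
  have sN: "\<sigma> \<in> N"
  proof -
    have "\<sigma> \<in> G i" if "i < n" for i
    proof -
      have "\<sigma> (pth t) \<in> U i" if t: "t \<in> I i" for t
      proof -
        have t01: "t \<in> {0..1}" using t Isub[OF \<open>i < n\<close>] by blast
        have "real i / real n \<in> I i" using Ile[of i] by (simp add: I_def)
        then have i01: "real i / real n \<in> {0..1}" using Isub[OF \<open>i < n\<close>] by blast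
        have e: "real (Suc i) / real n - real i / real n = 1 / real n"
          by (simp add: diff_divide_distrib[symmetric])
        have "dist t (real i / real n) \<le> 1 / real n"
          using t e unfolding I_def dist_real_def by auto
        then have "dist (y t) (y (real i / real n)) < 1" using d(2)[OF i01 t01] nd by linarith
        moreover have "\<sigma> (pth t) \<in> WW" using path_of_simplex(2)[OF ss] t01 by (simp add: image_subset_iff)
        ultimately show ?thesis by (auto simp: U_def c_def y_def dist_real_def)
      qed
      then show ?thesis using ss by (auto simp: G_def)
    qed
    then show ?thesis by (auto simp: N_def)
  qed
  have bound: "lev (\<sigma>' (vtx 0)) \<le> lev (\<sigma>' (vtx 1)) + n \<and> lev (\<sigma>' (vtx 1)) \<le> lev (\<sigma>' (vtx 0)) + n"
    if s': "\<sigma>' \<in> N" for \<sigma>'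
  proof -
    have G': "\<And>i. i < n \<Longrightarrow> \<sigma>' \<in> G i" using s' by (auto simp: N_def)
    have ss': "singular_simplex 1 XX \<sigma>'" using G'[OF n0] by (simp add: G_def)
    have "lev (\<sigma>' (pth 0)) \<le> lev (\<sigma>' (pth 1)) + n \<and> lev (\<sigma>' (pth 1)) \<le> lev (\<sigma>' (pth 0)) + n"
    proof (rule chain_lev[OF path_of_simplex[OF ss'] n0 Lset_open])
      fix i assume i: "i < n"
      have inU: "\<bar>snd (\<sigma>' (pth t)) - c i\<bar> < 1" if "t \<in> I i" for t
        using G'[OF i] that by (auto simp: G_def U_def)
      show "(\<forall>t\<in>{real i / real n..real (Suc i) / real n}. snd (\<sigma>' (pth t)) \<noteq> 1)
          \<or> (\<forall>t\<in>{real i / real n..real (Suc i) / real n}. snd (\<sigma>' (pth t)) \<noteq> -1)"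
      proof (cases "0 \<le> c i")
        case True
        then show ?thesis using inU unfolding I_def by force
      next
        case False
        then show ?thesis using inU unfolding I_def by force
      qed
    qed
    then show ?thesis by (simp add: pth0 pth1)
  qed
  show ?thesis using No sN bound by blast
qed

lemma compact_bound:
  assumes "compactin (compact_open_simplices 1 XX) K"
  shows "\<exists>M. \<forall>\<sigma>\<in>K. lev (\<sigma> (vtx 0)) \<le> lev (\<sigma> (vtx 1)) + M \<and> lev (\<sigma> (vtx 1)) \<le> lev (\<sigma> (vtx 0)) + M"
proof -
  let ?T = "compact_open_simplices 1 XX"
  obtain N nn where Nn: "\<And>\<sigma>. \<sigma> \<in> topspace ?T \<Longrightarrow> openin ?T (N \<sigma>) \<and> \<sigma> \<in> N \<sigma> \<and>
     (\<forall>\<sigma>'\<in>N \<sigma>. lev (\<sigma>' (vtx 0)) \<le> lev (\<sigma>' (vtx 1)) + nn \<sigma> \<and> lev (\<sigma>' (vtx 1)) \<le> lev (\<sigma>' (vtx 0)) + nn \<sigma>)"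
    using local_bound by metis
  have Ks: "K \<subseteq> topspace ?T" using assms by (simp add: compactin_subset_topspace)
  have "\<exists>F. finite F \<and> F \<subseteq> N ` K \<and> K \<subseteq> \<Union>F"
    using assms unfolding compactin_def
    by (elim conjE allE[of _ "N ` K"] impE) (use Nn Ks in auto)
  then obtain F where F: "finite F" "F \<subseteq> N ` K" "K \<subseteq> \<Union>F" by blast
  then obtain C where C: "C \<subseteq> K" "finite C" "F = N ` C" by (meson finite_subset_image)
  define M where "M = (\<Sum>\<tau>\<in>C. nn \<tau>)"
  show ?thesis
  proof (intro exI ballI)
    fix \<sigma> assume "\<sigma> \<in> K"
    then obtain \<tau> where \<tau>: "\<tau> \<in> C" "\<sigma> \<in> N \<tau>" using F C by auto
    have le: "nn \<tau> \<le> M" unfolding M_def using C \<tau> by (intro member_le_sum) auto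
    have "lev (\<sigma> (vtx 0)) \<le> lev (\<sigma> (vtx 1)) + nn \<tau> \<and> lev (\<sigma> (vtx 1)) \<le> lev (\<sigma> (vtx 0)) + nn \<tau>"
      using Nn[of \<tau>] \<tau> C Ks by auto
    then show "lev (\<sigma> (vtx 0)) \<le> lev (\<sigma> (vtx 1)) + M \<and> lev (\<sigma> (vtx 1)) \<le> lev (\<sigma> (vtx 0)) + M"
      using le by linarith
  qed
qed

end


lemma fsbm_sums:
  assumes "finite_signed_borel_measure T \<nu>" "range A \<subseteq> borel_sets_of T" "disjoint_family A"
  shows "(\<lambda>n. \<nu> (A n)) sums \<nu> (\<Union>n. A n)"
  using assms unfolding finite_signed_borel_measure_def by blast

lemma fsbm_empty:
  assumes "finite_signed_borel_measure T \<nu>"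
  shows "\<nu> {} = 0"
proof -
  have "(\<lambda>n. \<nu> ((\<lambda>_. {}) n)) sums \<nu> (\<Union>n. (\<lambda>_::nat. {}) n)"
    by (rule fsbm_sums[OF assms]) (auto simp: borel_empty disjoint_family_on_def)
  then have "summable (\<lambda>n::nat. \<nu> {})" by (simp add: sums_summable)
  then have "(\<lambda>n::nat. \<nu> {}) \<longlonglongrightarrow> 0" by (rule summable_LIMSEQ_zero)
  then show ?thesis by (simp add: LIMSEQ_const_iff)
qed

lemma fsbm_add2:
  assumes fs: "finite_signed_borel_measure T \<nu>" and AB: "A \<in> borel_sets_of T" "B \<in> borel_sets_of T" "A \<inter> B = {}"
  shows "\<nu> (A \<union> B) = \<nu> A + \<nu> B"
proof -
  define F where "F = (\<lambda>n::nat. if n = 0 then A else if n = 1 then B else {})"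
  have "(\<lambda>n. \<nu> (F n)) sums \<nu> (\<Union>n. F n)"
  proof (rule fsbm_sums[OF fs])
    show "range F \<subseteq> borel_sets_of T" using AB by (auto simp: F_def borel_empty)
    show "disjoint_family F" using AB unfolding disjoint_family_on_def F_def by auto
  qed
  moreover have "(\<Union>n. F n) = A \<union> B"
  proof
    show "(\<Union>n. F n) \<subseteq> A \<union> B" by (auto simp: F_def split: if_splits)
    show "A \<union> B \<subseteq> (\<Union>n. F n)"
      using UN_upper[of 0 UNIV F] UN_upper[of 1 UNIV F] by (auto simp: F_def)
  qed
  moreover have "(\<lambda>n. \<nu> (F n)) sums (\<Sum>n\<in>{0,1}. \<nu> (F n))"
    by (rule sums_finite) (auto simp: F_def fsbm_empty[OF fs])
  ultimately show ?thesis by (simp add: sums_unique2 F_def)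
qed

lemma summable_band:
  assumes fs: "finite_signed_borel_measure T \<nu>"
    and carrier: "\<And>B. B \<in> borel_sets_of T \<Longrightarrow> B \<inter> K = {} \<Longrightarrow> \<nu> B = 0"
    and bor: "\<And>P. {\<sigma> \<in> topspace T. P (a \<sigma>) (b \<sigma>)} \<in> borel_sets_of T"
    and bnd: "\<And>\<sigma>. \<sigma> \<in> K \<Longrightarrow> b \<sigma> \<le> a \<sigma> + (M::nat)"
  shows "summable (\<lambda>k. \<nu> {\<sigma> \<in> topspace T. a \<sigma> \<le> k \<and> k < b \<sigma>})"
proof -
  define Tr where "Tr = (\<lambda>r k. {\<sigma> \<in> topspace T. a \<sigma> + r = k \<and> k < b \<sigma>})"
  have TrB: "Tr r k \<in> borel_sets_of T" for r k
    unfolding Tr_def by (rule bor[of "\<lambda>x y. x + r = k \<and> k < y"])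
  have zero: "\<nu> (Tr r k) = 0" if "M < r" for r k
  proof (rule carrier[OF TrB])
    show "Tr r k \<inter> K = {}"
    proof (rule ccontr)
      assume "Tr r k \<inter> K \<noteq> {}"
      then obtain \<sigma> where "\<sigma> \<in> Tr r k" "\<sigma> \<in> K" by blast
      then show False using bnd[of \<sigma>] that by (auto simp: Tr_def)
    qed
  qed
  have D: "\<nu> {\<sigma> \<in> topspace T. a \<sigma> \<le> k \<and> k < b \<sigma>} = (\<Sum>r\<in>{..M}. \<nu> (Tr r k))" for k
  proof -
    have r1: "range (\<lambda>r. Tr r k) \<subseteq> borel_sets_of T" using TrB by auto
    have r2: "disjoint_family (\<lambda>r. Tr r k)" by (auto simp: disjoint_family_on_def Tr_def)
    have "(\<lambda>r. \<nu> (Tr r k)) sums \<nu> (\<Union>r. Tr r k)"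
      by (rule fsbm_sums[OF fs r1 r2])
    moreover have "(\<Union>r. Tr r k) = {\<sigma> \<in> topspace T. a \<sigma> \<le> k \<and> k < b \<sigma>}"
    proof
      show "(\<Union>r. Tr r k) \<subseteq> {\<sigma> \<in> topspace T. a \<sigma> \<le> k \<and> k < b \<sigma>}" by (auto simp: Tr_def)
      show "{\<sigma> \<in> topspace T. a \<sigma> \<le> k \<and> k < b \<sigma>} \<subseteq> (\<Union>r. Tr r k)"
      proof
        fix \<sigma> assume "\<sigma> \<in> {\<sigma> \<in> topspace T. a \<sigma> \<le> k \<and> k < b \<sigma>}"
        then have "\<sigma> \<in> Tr (k - a \<sigma>) k" by (auto simp: Tr_def)
        then show "\<sigma> \<in> (\<Union>r. Tr r k)" by blast
      qed
    qed
    moreover have "(\<lambda>r. \<nu> (Tr r k)) sums (\<Sum>r\<in>{..M}. \<nu> (Tr r k))"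
      by (rule sums_finite) (auto simp: zero)
    ultimately show ?thesis using sums_unique2 by metis
  qed
  have S: "summable (\<lambda>k. \<nu> (Tr r k))" for r
  proof -
    have r1: "range (\<lambda>k. Tr r k) \<subseteq> borel_sets_of T" using TrB by auto
    have r2: "disjoint_family (\<lambda>k. Tr r k)" by (auto simp: disjoint_family_on_def Tr_def)
    have "(\<lambda>k. \<nu> (Tr r k)) sums \<nu> (\<Union>k. Tr r k)"
      by (rule fsbm_sums[OF fs r1 r2])
    then show ?thesis by (rule sums_summable)
  qed
  have "summable (\<lambda>k. \<Sum>r\<in>{..M}. \<nu> (Tr r k))" by (rule summable_sum) (rule S)
  then show ?thesis by (simp add: D)
qed

lemma simplical_face_vtx: "simplical_face 0 (vtx 0) = vtx 1" "simplical_face 1 (vtx 0) = vtx 0"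
  "simplical_face 0 (vtx 0) = vtx (Suc 0)" "simplical_face (Suc 0) (vtx 0) = vtx 0"
  by (auto simp: simplical_face_def vtx_def)

lemma vtx0_simplex0: "vtx 0 \<in> standard_simplex 0"
  by (simp add: standard_simplex_0 vtx_def)

lemma face_vtx:
  "singular_face 1 0 \<sigma> (vtx 0) = \<sigma> (vtx 1)" "singular_face 1 1 \<sigma> (vtx 0) = \<sigma> (vtx 0)"
  "singular_face (Suc 0) 0 \<sigma> (vtx 0) = \<sigma> (vtx (Suc 0))" "singular_face (Suc 0) (Suc 0) \<sigma> (vtx 0) = \<sigma> (vtx 0)"
  using vtx0_simplex0 by (simp_all add: singular_face_def simplical_face_vtx)

context warsaw begin

abbreviation "T0 \<equiv> compact_open_simplices 0 XX"
abbreviation "T1 \<equiv> compact_open_simplices 1 XX"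

definition L0 :: "nat \<Rightarrow> ((nat \<Rightarrow> real) \<Rightarrow> real \<times> real) set" where
  "L0 k = {\<tau> \<in> topspace T0. \<tau> (vtx 0) \<in> Lset k}"

lemma L0_borel: "L0 k \<in> borel_sets_of T0"
  unfolding L0_def by (rule borel_open, rule openin_cos_eval[OF vtx0_simplex0 Lset_openin])

lemma eval_open1: "v \<in> standard_simplex 1 \<Longrightarrow> {\<sigma> \<in> topspace T1. \<sigma> v \<in> Lset j} \<in> borel_sets_of T1"
  by (rule borel_open, rule openin_cos_eval[OF _ Lset_openin])

lemma lev_level_borel:
  assumes v: "v \<in> standard_simplex 1"
  shows "{\<sigma> \<in> topspace T1. lev (\<sigma> v) = i} \<in> borel_sets_of T1"
proof -
  have "{\<sigma> \<in> topspace T1. lev (\<sigma> v) = i} =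
        (if i = 0 then topspace T1 else {\<sigma> \<in> topspace T1. \<sigma> v \<in> Lset (i - 1)}) - {\<sigma> \<in> topspace T1. \<sigma> v \<in> Lset i}"
    by (auto simp: lev_iff)
  then show ?thesis
    using eval_open1[OF v] by (simp add: borel_Diff borel_topspace)
qed

lemma lev_pred_borel:
  assumes v: "v \<in> standard_simplex 1" "w \<in> standard_simplex 1"
  shows "{\<sigma> \<in> topspace T1. P (lev (\<sigma> v)) (lev (\<sigma> w))} \<in> borel_sets_of T1"
proof -
  have "{\<sigma> \<in> topspace T1. P (lev (\<sigma> v)) (lev (\<sigma> w))} =
    (\<Union>i. \<Union>j. if P i j then {\<sigma> \<in> topspace T1. lev (\<sigma> v) = i} \<inter> {\<sigma> \<in> topspace T1. lev (\<sigma> w) = j} else {})"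
    by auto
  moreover have "(\<Union>i. \<Union>j. if P i j then {\<sigma> \<in> topspace T1. lev (\<sigma> v) = i} \<inter> {\<sigma> \<in> topspace T1. lev (\<sigma> w) = j} else {})
      \<in> borel_sets_of T1"
    using lev_level_borel[OF v(1)] lev_level_borel[OF v(2)] by (intro borel_UN) (auto intro!: borel_Int borel_empty)
  ultimately show ?thesis by simp
qed

lemma not_boundary:
  assumes \<nu>: "\<nu> \<in> mt_chains 1 XX"
    and m: "\<And>k. mt_boundary 1 XX \<nu> (L0 k) = m k"
    and nm: "\<not> summable m"
  shows False
proof -
  have fs: "finite_signed_borel_measure T1 \<nu>" using \<nu> by (simp add: mt_chains_def)
  obtain K where K: "compactin T1 K" "\<And>B. B \<in> borel_sets_of T1 \<Longrightarrow> B \<inter> K = {} \<Longrightarrow> \<nu> B = 0"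
    using \<nu> unfolding mt_chains_def has_compact_carrier_def by blast
  obtain M where M: "\<And>\<sigma>. \<sigma> \<in> K \<Longrightarrow> lev (\<sigma> (vtx 0)) \<le> lev (\<sigma> (vtx 1)) + M \<and> lev (\<sigma> (vtx 1)) \<le> lev (\<sigma> (vtx 0)) + M"
    using compact_bound[OF K(1)] by blast
  define l0 where "l0 = (\<lambda>\<sigma>::(nat \<Rightarrow> real) \<Rightarrow> real \<times> real. lev (\<sigma> (vtx 0)))"
  define l1 where "l1 = (\<lambda>\<sigma>::(nat \<Rightarrow> real) \<Rightarrow> real \<times> real. lev (\<sigma> (vtx 1)))"
  have bor01: "{\<sigma> \<in> topspace T1. P (l0 \<sigma>) (l1 \<sigma>)} \<in> borel_sets_of T1" for P
    unfolding l0_def l1_def by (rule lev_pred_borel[OF vtx_simplex])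
  have bor10: "{\<sigma> \<in> topspace T1. P (l1 \<sigma>) (l0 \<sigma>)} \<in> borel_sets_of T1" for P
    using bor01[of "\<lambda>x y. P y x"] .
  have SD: "summable (\<lambda>k. \<nu> {\<sigma> \<in> topspace T1. l0 \<sigma> \<le> k \<and> k < l1 \<sigma>})"
    by (rule summable_band[OF fs K(2) bor01]) (use M in \<open>auto simp: l0_def l1_def\<close>)
  have SE: "summable (\<lambda>k. \<nu> {\<sigma> \<in> topspace T1. l1 \<sigma> \<le> k \<and> k < l0 \<sigma>})"
    by (rule summable_band[OF fs K(2) bor10]) (use M in \<open>auto simp: l0_def l1_def\<close>)
  have face_set: "{\<sigma> \<in> topspace T1. singular_face 1 0 \<sigma> \<in> L0 k} = {\<sigma> \<in> topspace T1. k < l1 \<sigma>}"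
     "{\<sigma> \<in> topspace T1. singular_face 1 1 \<sigma> \<in> L0 k} = {\<sigma> \<in> topspace T1. k < l0 \<sigma>}" for k
    using singular_simplex_singular_face[of 1 XX _ 0] singular_simplex_singular_face[of 1 XX _ 1]
    by (auto simp: L0_def topspace_cos face_vtx lev_iff l0_def l1_def)
  have mk: "m k = \<nu> {\<sigma> \<in> topspace T1. l0 \<sigma> \<le> k \<and> k < l1 \<sigma>} - \<nu> {\<sigma> \<in> topspace T1. l1 \<sigma> \<le> k \<and> k < l0 \<sigma>}" for k
  proof -
    let ?C = "{\<sigma> \<in> topspace T1. k < l0 \<sigma> \<and> k < l1 \<sigma>}"
    let ?D = "{\<sigma> \<in> topspace T1. l0 \<sigma> \<le> k \<and> k < l1 \<sigma>}"
    let ?E = "{\<sigma> \<in> topspace T1. l1 \<sigma> \<le> k \<and> k < l0 \<sigma>}"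
    have "m k = \<nu> {\<sigma> \<in> topspace T1. k < l1 \<sigma>} - \<nu> {\<sigma> \<in> topspace T1. k < l0 \<sigma>}"
      using m[of k] face_set[of k] by (simp add: mt_boundary_def mt_face_def L0_borel)
    moreover have "{\<sigma> \<in> topspace T1. k < l1 \<sigma>} = ?D \<union> ?C" by auto
    moreover have "{\<sigma> \<in> topspace T1. k < l0 \<sigma>} = ?E \<union> ?C" by auto
    moreover have "\<nu> (?D \<union> ?C) = \<nu> ?D + \<nu> ?C"
      by (rule fsbm_add2[OF fs bor01 bor01]) auto
    moreover have "\<nu> (?E \<union> ?C) = \<nu> ?E + \<nu> ?C"
      by (rule fsbm_add2[OF fs bor10 bor01]) auto
    ultimately show ?thesis by simp
  qed
  have "summable m" unfolding mk by (rule summable_diff[OF SD SE])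
  then show False using nm by simp
qed

end


definition sinept :: "real \<Rightarrow> real \<times> real" where "sinept \<theta> = (1 / \<theta>, sin \<theta>)"
definition th :: "nat \<Rightarrow> real" where "th j = 2 * pi * (real j + 1) + pi / 2"
definition pt :: "'a \<Rightarrow> (nat \<Rightarrow> real) \<Rightarrow> 'a" where "pt u = restrict (\<lambda>_. u) (standard_simplex 0)"

lemma sinept_sine:
  assumes "3 * pi / 2 \<le> \<theta>" shows "sinept \<theta> \<in> warsaw_sine_part"
proof -
  have t0: "0 < \<theta>" using assms pi_gt_zero by linarith
  have "1 / \<theta> \<le> 2 / (3 * pi)" using assms t0 by (simp add: field_simps)
  then show ?thesis unfolding sinept_def warsaw_sine_part_def warsaw_xmin_def using t0
    by (intro CollectI exI[of _ "1/\<theta>"]) auto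
qed

lemma th_ge: "3 * pi / 2 \<le> th j"
  unfolding th_def using pi_gt_zero by (simp add: field_simps)

lemma th_ge_Suc: "real (Suc j) \<le> th j"
proof -
  have "1 * (real j + 1) \<le> 2 * pi * (real j + 1)" by (rule mult_right_mono) (use pi_gt3 in auto)
  moreover have "real (Suc j) = 1 * (real j + 1)" by simp
  ultimately have "real (Suc j) \<le> 2 * pi * (real j + 1)" by linarith
  then show ?thesis unfolding th_def using pi_gt_zero by linarith
qed

lemma sin_th: "sin (th j) = 1"
  using sin_peak[of "Suc j"] by (simp add: th_def add.commute)

lemma qs_eq: "sinept (3 * pi / 2) = (warsaw_xmin, -1)"
proof -
  have "sin (3 * pi / 2) = -1" using sin_periodic_pi2[of "pi/2"] by (simp add: field_simps)
  then show ?thesis by (simp add: sinept_def warsaw_xmin_def)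
qed

lemma pt_eval: "pt u (vtx 0) = u"
  by (simp add: pt_def vtx0_simplex0)

lemma pt_inj: "pt u = pt v \<Longrightarrow> u = v"
  by (metis pt_eval)

lemma singular_pt: "u \<in> topspace X \<Longrightarrow> singular_simplex 0 X (pt u)"
  unfolding singular_simplex_def pt_def
  by (auto intro: continuous_map_eq[of _ _ "\<lambda>_. u"])

lemma top0_char:
  assumes "\<tau> \<in> topspace (compact_open_simplices 0 X)"
  shows "\<tau> = pt (\<tau> (vtx 0))"
proof
  fix x
  have ext: "\<tau> \<in> extensional (standard_simplex 0)" using assms by (simp add: topspace_cos singular_simplex_def)
  show "\<tau> x = pt (\<tau> (vtx 0)) x"
  proof (cases "x \<in> standard_simplex 0")
    case True
    then have "x = vtx 0" by (simp add: standard_simplex_0 vtx_def)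
    then show ?thesis by (simp add: pt_eval)
  next
    case False then show ?thesis using ext by (simp add: pt_def extensional_def)
  qed
qed

lemma inv_th_lim: "(\<lambda>j. 1 / th j) \<longlonglongrightarrow> 0"
proof (rule tendsto_sandwich[OF _ _ tendsto_const LIMSEQ_inverse_real_of_nat])
  have p: "0 < th j" for j using th_ge[of j] pi_gt_zero by linarith
  show "\<forall>\<^sub>F n in sequentially. 0 \<le> 1 / th n" using p by (simp add: less_imp_le)
  show "\<forall>\<^sub>F n in sequentially. 1 / th n \<le> inverse (real (Suc n))"
    using th_ge_Suc p by (simp add: divide_inverse_commute le_imp_inverse_le)
qed

context warsaw begin

lemma openin_XX_minus: "openin XX (WW - {c})"
proof -
  have "WW - {c} = (- {c}) \<inter> WW" by auto
  moreover have "open (- {c})" by (simp add: open_Compl)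
  ultimately show ?thesis by (auto simp: openin_subtopology)
qed

lemma singleton_borel:
  assumes "\<tau>0 \<in> topspace T0"
  shows "{\<tau>0} \<in> borel_sets_of T0"
proof -
  have "topspace T0 - {\<tau>0} = {\<tau> \<in> topspace T0. \<tau> (vtx 0) \<in> WW - {\<tau>0 (vtx 0)}}"
  proof -
    have "\<tau> (vtx 0) \<in> WW" if "\<tau> \<in> topspace T0" for \<tau>
      using that vtx0_simplex0 unfolding topspace_cos singular_simplex_def continuous_map_def
      by auto
    moreover have "\<tau> \<noteq> \<tau>0 \<longleftrightarrow> \<tau> (vtx 0) \<noteq> \<tau>0 (vtx 0)" if "\<tau> \<in> topspace T0" for \<tau>
      using top0_char[OF that] top0_char[OF assms] by metis
    ultimately show ?thesis by auto
  qed
  then have "topspace T0 - {\<tau>0} \<in> borel_sets_of T0"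
    using openin_cos_eval[OF vtx0_simplex0 openin_XX_minus] by (simp add: borel_open)
  from borel_compl[OF this] show ?thesis using assms by (simp add: Diff_Diff_Int)
qed

lemma pt_top0: "u \<in> WW \<Longrightarrow> pt u \<in> topspace T0"
  by (simp add: topspace_cos singular_pt)

lemma pt_limit:
  assumes u: "\<And>j. u j \<in> WW" "ul \<in> WW" "u \<longlonglongrightarrow> ul"
  shows "limitin T0 (\<lambda>j. pt (u j)) (pt ul) sequentially"
  unfolding limitin_def
proof (intro conjI allI impI)
  show "pt ul \<in> topspace T0" using u by (simp add: pt_top0)
  fix U assume "openin T0 U \<and> pt ul \<in> U"
  then have gen: "generate_topology_on {{\<sigma>. singular_simplex 0 XX \<sigma> \<and> \<sigma> ` K \<subseteq> U} | K U.
        compactin (subtopology PT (standard_simplex 0)) K \<and> openin XX U} U" and inU: "pt ul \<in> U"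
    unfolding compact_open_simplices_def by (auto dest: openin_topology_generated_by)
  from gen inU show "\<forall>\<^sub>F j in sequentially. pt (u j) \<in> U"
  proof (induction rule: generate_topology_on.induct)
    case Empty then show ?case by simp
  next
    case (Int a b) then show ?case by (auto intro: eventually_conj)
  next
    case (UN K)
    then obtain k where "k \<in> K" "pt ul \<in> k" by blast
    then have "\<forall>\<^sub>F j in sequentially. pt (u j) \<in> k" using UN by blast
    then show ?case using \<open>k \<in> K\<close> by (auto elim: eventually_mono)
  next
    case (Basis s)
    then obtain K V where s: "s = {\<sigma>. singular_simplex 0 XX \<sigma> \<and> \<sigma> ` K \<subseteq> V}"
      and K: "compactin (subtopology PT (standard_simplex 0)) K" and V: "openin XX V" by blast
    have Ks: "K \<subseteq> standard_simplex 0" using compactin_subset_topspace[OF K] by simp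
    show ?case
    proof (cases "K = {}")
      case True
      then show ?thesis using u s by (auto simp: singular_pt)
    next
      case False
      then have "ul \<in> V" using Basis.prems s Ks by (auto simp: pt_def)
      obtain V' where V': "open V'" "V = V' \<inter> WW" using V by (auto simp: openin_subtopology)
      have "\<forall>\<^sub>F j in sequentially. u j \<in> V'"
        using topological_tendstoD[OF u(3) V'(1)] \<open>ul \<in> V\<close> V' by auto
      moreover have "pt (u j) \<in> s" if "u j \<in> V'" for j
      proof -
        have "singular_simplex 0 XX (pt (u j))" using u(1)[of j] by (simp add: singular_pt)
        moreover have "pt (u j) ` K \<subseteq> V" using that u(1)[of j] V' Ks by (auto simp: pt_def)
        ultimately show ?thesis using s by simp
      qed
      ultimately show ?thesis by (auto elim: eventually_mono)
    qed
  qed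
qed

definition Q :: "nat \<Rightarrow> (nat \<Rightarrow> real) \<Rightarrow> real \<times> real" where "Q j = pt (sinept (th j))"
definition Qs :: "(nat \<Rightarrow> real) \<Rightarrow> real \<times> real" where "Qs = pt (sinept (3 * pi / 2))"
definition Qinf :: "(nat \<Rightarrow> real) \<Rightarrow> real \<times> real" where "Qinf = pt (0, 1)"

lemma Q_top: "Q j \<in> topspace T0"
  unfolding Q_def using sinept_sine[OF th_ge] by (auto intro: pt_top0)

lemma Qs_top: "Qs \<in> topspace T0"
  unfolding Qs_def using sinept_sine[of "3*pi/2"] by (auto intro: pt_top0)

lemma Q_ne_Qs: "Q j \<noteq> Qs"
proof
  assume "Q j = Qs"
  then have "sinept (th j) = sinept (3 * pi / 2)" unfolding Q_def Qs_def by (rule pt_inj)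
  then show False using sin_th[of j] qs_eq by (simp add: sinept_def)
qed

lemma Q_limit: "limitin T0 Q Qinf sequentially"
proof -
  have "(\<lambda>j. sinept (th j)) \<longlonglongrightarrow> (0, 1)"
    unfolding sinept_def sin_th by (intro tendsto_Pair inv_th_lim tendsto_const)
  moreover have "(0::real, 1::real) \<in> WW" by (simp add: warsaw_segment_def)
  ultimately show ?thesis unfolding Q_def Qinf_def
    by (intro pt_limit) (use sinept_sine[OF th_ge] in auto)
qed

definition K0 where "K0 = insert Qinf (range Q) \<union> {Qs}"

lemma K0_compact: "compactin T0 K0"
  unfolding K0_def
  by (intro compactin_Un compactin_sequence_with_limit[OF Q_limit]) (auto simp: Q_top Qs_top)

end


definition d0 :: "real \<Rightarrow> nat \<Rightarrow> real" where "d0 c = (\<lambda>j. if j = 0 then c else 0)"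

lemma d0_sums: "d0 c sums c"
  using sums_single[of 0 "\<lambda>_. c"] by (simp add: d0_def)

lemma d0_summable: "summable (d0 c)" using d0_sums by (rule sums_summable)

lemma suminf_d0_mult: "suminf (\<lambda>j. d0 c j * x) = c * x"
proof -
  have "(\<lambda>j. d0 c j * x) sums (c * x)" by (rule sums_mult2[OF d0_sums])
  then show ?thesis by (rule sums_unique[symmetric])
qed

context warsaw begin

definition chainw :: "(nat \<Rightarrow> real) \<Rightarrow> ((nat \<Rightarrow> real) \<Rightarrow> real \<times> real) set \<Rightarrow> real" where
  "chainw w = (\<lambda>A. if A \<in> borel_sets_of T0
      then measure (ptm T0 Q w) A - measure (ptm T0 (\<lambda>_. Qs) (d0 (suminf w))) A else 0)"

lemma chainw_props:
  assumes w: "\<And>j. 0 \<le> w j" "summable w"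
  shows "chainw w \<in> mt_chains 0 XX"
    and "continuous_map T0 euclideanreal f \<Longrightarrow> (\<And>j. \<bar>f (Q j)\<bar> \<le> B) \<Longrightarrow>
          signed_integral T0 (chainw w) f = suminf (\<lambda>j. w j * f (Q j)) - suminf w * f Qs"
    and "A \<in> borel_sets_of T0 \<Longrightarrow> chainw w A = suminf (\<lambda>j. w j * indicator A (Q j)) - suminf w * indicator A Qs"
proof -
  have c0: "0 \<le> suminf w" using w by (simp add: suminf_nonneg)
  have dw: "\<And>j. 0 \<le> d0 (suminf w) j" using c0 by (simp add: d0_def)
  note M1 = finite_measure_ptm[OF Q_top w] sets_ptm space_ptm
  note M2 = finite_measure_ptm[OF Qs_top dw d0_summable] sets_ptm space_ptm
  have Zb: "{Qs} \<in> borel_sets_of T0" by (rule singleton_borel[OF Qs_top])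
  have meas1: "A \<in> borel_sets_of T0 \<Longrightarrow> measure (ptm T0 Q w) A = suminf (\<lambda>j. w j * indicator A (Q j))" for A
    by (rule measure_ptm[OF Q_top w])
  have meas2: "A \<in> borel_sets_of T0 \<Longrightarrow> measure (ptm T0 (\<lambda>_. Qs) (d0 (suminf w))) A = suminf w * indicator A Qs" for A
    by (simp add: measure_ptm[OF Qs_top dw d0_summable] suminf_d0_mult)
  have Z1: "measure (ptm T0 Q w) {Qs} = 0" using Q_ne_Qs by (simp add: meas1[OF Zb])
  have Z2: "measure (ptm T0 (\<lambda>_. Qs) (d0 (suminf w))) (topspace T0 - {Qs}) = 0"
    by (simp add: meas2 borel_compl[OF Zb])
  note J = jordan_two[OF M1 M2 Zb Z1 Z2]
  have fs: "finite_signed_borel_measure T0 (chainw w)" using J(1) unfolding chainw_def .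
  show val: "A \<in> borel_sets_of T0 \<Longrightarrow> chainw w A = suminf (\<lambda>j. w j * indicator A (Q j)) - suminf w * indicator A Qs" for A
    by (simp add: chainw_def meas1 meas2)
  have hc: "has_compact_carrier T0 (chainw w)"
    unfolding has_compact_carrier_def
  proof (intro exI conjI ballI impI)
    show "compactin T0 K0" by (rule K0_compact)
    fix B assume B: "B \<in> borel_sets_of T0" "B \<inter> K0 = {}"
    then have "Q j \<notin> B" "Qs \<notin> B" for j by (auto simp: K0_def)
    then show "chainw w B = 0" by (simp add: val[OF B(1)])
  qed
  show "chainw w \<in> mt_chains 0 XX" using fs hc by (simp add: mt_chains_def)
  assume f: "continuous_map T0 euclideanreal f" and B: "\<And>j. \<bar>f (Q j)\<bar> \<le> B"
  have fm: "f \<in> borel_measurable (borel_space T0)" by (rule continuous_map_borel_measurable[OF f])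
  have s1: "summable (\<lambda>j. w j * \<bar>f (Q j)\<bar>)"
    by (rule summable_comparison_test[OF _ summable_mult2[OF w(2), of B]])
       (use w B in \<open>auto intro: mult_left_mono\<close>)
  have s2: "summable (\<lambda>j. d0 (suminf w) j * \<bar>f Qs\<bar>)" by (rule summable_mult2[OF d0_summable])
  have "signed_integral T0 (chainw w) f = integral\<^sup>L (ptm T0 Q w) f - integral\<^sup>L (ptm T0 (\<lambda>_. Qs) (d0 (suminf w))) f"
    unfolding chainw_def by (rule J(2))
  also have "\<dots> = suminf (\<lambda>j. w j * f (Q j)) - suminf w * f Qs"
    using integral_ptm[where P=Q and a=w and T=T0, OF Q_top w(1) w(2) fm s1]
      integral_ptm[where P="\<lambda>_. Qs" and T=T0, OF Qs_top dw d0_summable fm s2]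
    by (simp add: suminf_d0_mult)
  finally show "signed_integral T0 (chainw w) f = suminf (\<lambda>j. w j * f (Q j)) - suminf w * f Qs" .
qed

lemma f_Q_bounded:
  assumes f: "continuous_map T0 euclideanreal f"
  shows "\<exists>B. \<forall>j. \<bar>f (Q j)\<bar> \<le> B"
proof -
  have "limitin euclideanreal (f \<circ> Q) (f Qinf) sequentially"
    by (rule continuous_map_limit[OF f Q_limit])
  then have "convergent (\<lambda>j. f (Q j))" by (auto simp: convergent_def o_def)
  then have "Bseq (\<lambda>j. f (Q j))" by (rule convergent_imp_Bseq)
  then show ?thesis unfolding Bseq_def by auto
qed

lemma Q_in_L0: "Q j \<in> L0 k \<longleftrightarrow> k \<le> j"
proof -
  have p: "0 < th j" using th_ge[of j] pi_gt_zero by linarith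
  have "Q j \<in> L0 k \<longleftrightarrow> 1 / th j < cut k"
    using p Q_top[of j] by (simp add: L0_def Q_def pt_eval Lset_elem sinept_def)
  also have "\<dots> \<longleftrightarrow> 2 * pi * (real k + 1) < th j"
  proof -
    have b: "0 < 2 * pi * (real k + 1)" by simp
    have "1 / th j < 1 / (2 * pi * (real k + 1)) \<longleftrightarrow> inverse (th j) < inverse (2 * pi * (real k + 1))"
      by (simp only: inverse_eq_divide)
    also have "\<dots> \<longleftrightarrow> 2 * pi * (real k + 1) < th j" by (rule inverse_less_iff_less[OF p b])
    finally show ?thesis unfolding cut_def .
  qed
  also have "\<dots> \<longleftrightarrow> k \<le> j"
  proof
    assume a: "2 * pi * (real k + 1) < th j"
    show "k \<le> j"
    proof (rule ccontr)
      assume "\<not> k \<le> j"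
      then have "real j + 2 \<le> real k + 1" by simp
      then have "2 * pi * (real j + 2) \<le> 2 * pi * (real k + 1)" by simp
      then show False using a pi_gt_zero by (simp add: th_def algebra_simps)
    qed
  next
    assume "k \<le> j"
    then have "2 * pi * (real k + 1) \<le> 2 * pi * (real j + 1)" by simp
    moreover have "th j = 2 * pi * (real j + 1) + pi / 2" by (simp add: th_def)
    ultimately show "2 * pi * (real k + 1) < th j" using pi_gt_zero by linarith
  qed
  finally show ?thesis .
qed

lemma Qs_notin_L0: "Qs \<notin> L0 k"
  using cut_lt_xmin[of k] by (simp add: L0_def Qs_def pt_eval qs_eq Lset_elem)

end


definition aw :: "nat \<Rightarrow> real" where "aw j = 1 / (real j + 1) - 1 / (real j + 2)"
definition tr :: "nat \<Rightarrow> nat \<Rightarrow> real" where "tr n = (\<lambda>j. if j < n then aw j else 0)"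

lemma tail_sums: "(\<lambda>j. if k \<le> j then aw j else 0) sums (1 / (real k + 1))"
proof -
  define f where "f = (\<lambda>j. if j < k then 1 / (real k + 1) else 1 / (real j + 1))"
  have lim: "f \<longlonglongrightarrow> 0"
  proof -
    have "(\<lambda>j. 1 / (real j + 1)) \<longlonglongrightarrow> 0"
      using LIMSEQ_inverse_real_of_nat by (simp add: inverse_eq_divide add.commute)
    moreover have "\<forall>\<^sub>F j in sequentially. 1 / (real j + 1) = f j"
      by (rule eventually_sequentiallyI[of k]) (simp add: f_def)
    ultimately show ?thesis by (rule Lim_transform_eventually)
  qed
  have e: "f j - f (Suc j) = (if k \<le> j then aw j else 0)" for j
    by (auto simp: f_def aw_def add.commute)
  have "(\<lambda>j. f j - f (Suc j)) sums (f 0 - 0)" by (rule telescope_sums'[OF lim])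
  moreover have "f 0 = 1 / (real k + 1)" by (simp add: f_def)
  ultimately show ?thesis by (simp add: e)
qed

lemma aw_nonneg: "0 \<le> aw j"
  by (simp add: aw_def frac_le)

lemma aw_sums: "aw sums 1"
  using tail_sums[of 0] by simp

lemma aw_summable: "summable aw" using aw_sums by (rule sums_summable)

lemma tr_nonneg: "0 \<le> tr n j" by (simp add: tr_def aw_nonneg)

lemma tr_sums: "tr n sums (\<Sum>j<n. aw j)"
proof -
  have "tr n sums (\<Sum>j\<in>{..<n}. tr n j)" by (rule sums_finite) (auto simp: tr_def)
  then show ?thesis by (simp add: tr_def)
qed

lemma tr_summable: "summable (tr n)" using tr_sums by (rule sums_summable)

lemma not_summable_inv: "\<not> summable (\<lambda>k. 1 / (real k + 1))"
proof
  assume "summable (\<lambda>k. 1 / (real k + 1))"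
  then have "summable (\<lambda>n. inverse (real (Suc n)))" by (simp add: inverse_eq_divide add.commute)
  then have "summable (\<lambda>n. inverse (real n))" by (subst (asm) summable_Suc_iff[of "\<lambda>n. inverse (real n)"])
  then show False using not_summable_harmonic[where 'a=real] by simp
qed

lemma fsbm_measure:
  assumes M: "finite_measure M" "sets M = borel_sets_of T"
  shows "finite_signed_borel_measure T (\<lambda>A. if A \<in> borel_sets_of T then measure M A else 0)"
  unfolding finite_signed_borel_measure_def
proof (intro conjI allI impI)
  interpret m: finite_measure M by fact
  fix A :: "nat \<Rightarrow> _" assume A: "range A \<subseteq> borel_sets_of T" "disjoint_family A"
  have S: "(\<lambda>n. measure M (A n)) sums measure M (\<Union>n. A n)"
    by (rule m.finite_measure_UNION) (use A M in auto)
  have U: "(\<Union>n. A n) \<in> borel_sets_of T" using A by (intro borel_UN) auto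
  have E1: "(\<lambda>n. if A n \<in> borel_sets_of T then measure M (A n) else 0) = (\<lambda>n. measure M (A n))"
    using A by (intro ext) (simp add: image_subset_iff)
  show "(\<lambda>n. if A n \<in> borel_sets_of T then measure M (A n) else 0) sums
        (if (\<Union>n. A n) \<in> borel_sets_of T then measure M (\<Union>n. A n) else 0)"
    unfolding E1 using S U by simp
qed simp

definition sinept_path :: "nat \<Rightarrow> real \<Rightarrow> real \<times> real" where
  "sinept_path j t = sinept (3 * pi / 2 + t * (th j - 3 * pi / 2))"

lemma sinept_path_arg: "t \<in> {0..1} \<Longrightarrow> 3 * pi / 2 \<le> 3 * pi / 2 + t * (th j - 3 * pi / 2)"
  using th_ge[of j] by simp

lemma sinept_path_cont: "continuous_on {0..1} (sinept_path j)"
proof -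
  have nz: "3 * pi / 2 + t * (th j - 3 * pi / 2) \<noteq> 0" if "t \<in> {0..1}" for t
    using sinept_path_arg[OF that, of j] pi_gt_zero by linarith
  show ?thesis unfolding sinept_path_def sinept_def
    by (intro continuous_intros) (use nz in auto)
qed

lemma sinept_path_01: "sinept_path j 0 = sinept (3 * pi / 2)" "sinept_path j 1 = sinept (th j)"
  by (simp_all add: sinept_path_def)

definition Gam :: "nat \<Rightarrow> (nat \<Rightarrow> real) \<Rightarrow> real \<times> real" where
  "Gam j = restrict (\<lambda>x. sinept_path j (x 1)) (standard_simplex 1)"

lemma simplex1_coord: "x \<in> standard_simplex 1 \<Longrightarrow> x 1 \<in> {0..1}"
  by (simp add: standard_simplex_def)

context warsaw begin

lemma Gam_top: "Gam j \<in> topspace T1"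
proof -
  have c1: "continuous_map (subtopology PT (standard_simplex 1)) (top_of_set {0..1}) (\<lambda>x. x 1)"
    by (auto simp: continuous_map_in_subtopology standard_simplex_def
        intro!: continuous_map_from_subtopology continuous_map_product_projection)
  have img: "sinept_path j t \<in> WW" if "t \<in> {0..1}" for t
    using sinept_sine[OF sinept_path_arg[OF that]] by (simp add: sinept_path_def)
  have c2: "continuous_map (top_of_set {0..1}) XX (sinept_path j)"
    using sinept_path_cont img by auto
  have "continuous_map (subtopology PT (standard_simplex 1)) XX (sinept_path j \<circ> (\<lambda>x. x 1))"
    by (rule continuous_map_compose[OF c1 c2])
  then have "continuous_map (subtopology PT (standard_simplex 1)) XX (Gam j)"
    by (rule continuous_map_eq) (simp add: Gam_def)
  then show ?thesis by (simp add: topspace_cos singular_simplex_def Gam_def)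
qed

lemma Gam_vtx: "Gam j (vtx 1) = sinept (th j)" "Gam j (vtx 0) = sinept (3 * pi / 2)"
  using vtx_simplex by (simp_all add: Gam_def vtx_def sinept_path_01)

lemma face_Gam: "singular_face 1 0 (Gam j) = Q j" "singular_face 1 1 (Gam j) = Qs"
proof -
  show "singular_face 1 0 (Gam j) = Q j"
  proof
    fix x show "singular_face 1 0 (Gam j) x = Q j x"
    proof (cases "x \<in> standard_simplex 0")
      case True
      then have x: "x = vtx 0" by (simp add: standard_simplex_0 vtx_def)
      have "singular_face 1 0 (Gam j) x = Gam j (vtx 1)"
        using True x by (simp add: singular_face_def simplical_face_vtx(1))
      then show ?thesis using x Gam_vtx(1) by (simp add: Q_def pt_eval)
    next
      case False then show ?thesis by (simp add: singular_face_def Q_def pt_def)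
    qed
  qed
  show "singular_face 1 1 (Gam j) = Qs"
  proof
    fix x show "singular_face 1 1 (Gam j) x = Qs x"
    proof (cases "x \<in> standard_simplex 0")
      case True
      then have x: "x = vtx 0" by (simp add: standard_simplex_0 vtx_def)
      have "singular_face 1 1 (Gam j) x = Gam j (vtx 0)"
        using True x by (simp add: singular_face_def simplical_face_vtx)
      then show ?thesis using x Gam_vtx(2) by (simp add: Qs_def pt_eval)
    next
      case False then show ?thesis by (simp add: singular_face_def Qs_def pt_def)
    qed
  qed
qed

definition nuw :: "(nat \<Rightarrow> real) \<Rightarrow> ((nat \<Rightarrow> real) \<Rightarrow> real \<times> real) set \<Rightarrow> real" where
  "nuw w = (\<lambda>A. if A \<in> borel_sets_of T1 then measure (ptm T1 Gam w) A else 0)"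

lemma beta_boundary: "chainw (tr n) \<in> mt_boundaries 0 XX"
proof -
  let ?w = "tr n"
  have w: "\<And>j. 0 \<le> ?w j" "summable ?w" by (rule tr_nonneg, rule tr_summable)
  have fM: "finite_measure (ptm T1 Gam ?w)" by (rule finite_measure_ptm[OF Gam_top w])
  have meas: "A \<in> borel_sets_of T1 \<Longrightarrow> measure (ptm T1 Gam ?w) A = suminf (\<lambda>j. ?w j * indicator A (Gam j))" for A
    by (rule measure_ptm[OF Gam_top w])
  have ch: "nuw ?w \<in> mt_chains 1 XX"
    unfolding mt_chains_def
  proof (intro CollectI conjI)
    show "finite_signed_borel_measure T1 (nuw ?w)" unfolding nuw_def
      by (rule fsbm_measure[OF fM]) simp
    show "has_compact_carrier T1 (nuw ?w)" unfolding has_compact_carrier_def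
    proof (intro exI conjI ballI impI)
      show "compactin T1 (Gam ` {..<n})" by (rule finite_imp_compactin) (use Gam_top in auto)
      fix B assume B: "B \<in> borel_sets_of T1" "B \<inter> Gam ` {..<n} = {}"
      have nB: "Gam j \<notin> B" if "j < n" for j using B(2) that by blast
      have z: "(\<lambda>j. ?w j * indicator B (Gam j)) = (\<lambda>j. 0)"
        using nB by (auto simp: tr_def indicator_def)
      have "nuw ?w B = measure (ptm T1 Gam ?w) B" unfolding nuw_def using B(1) by simp
      also have "\<dots> = 0" unfolding meas[OF B(1)] z by simp
      finally show "nuw ?w B = 0" .
    qed
  qed
  have bd: "mt_boundary 1 XX (nuw ?w) = chainw ?w"
  proof
    fix A
    show "mt_boundary 1 XX (nuw ?w) A = chainw ?w A"
    proof (cases "A \<in> borel_sets_of T0")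
      case False
      then show ?thesis by (simp add: mt_boundary_def mt_face_def chainw_def)
    next
      case True
      have pre: "{\<sigma> \<in> topspace T1. singular_face 1 i \<sigma> \<in> A} \<in> borel_sets_of T1" if "i \<le> 1" for i
        using face_preimage_borel[of 1 i A XX] that True by simp
      have ind: "indicator {\<sigma> \<in> topspace T1. singular_face 1 i \<sigma> \<in> A} (Gam j) = (indicator A (singular_face 1 i (Gam j)) :: real)" for i j
        using Gam_top[of j] by (simp add: indicator_def)
      have m0: "measure (ptm T1 Gam ?w) {\<sigma> \<in> topspace T1. singular_face 1 0 \<sigma> \<in> A} = suminf (\<lambda>j. ?w j * indicator A (Q j))"
        using meas[OF pre[of 0]] unfolding ind face_Gam by simp
      have m1: "measure (ptm T1 Gam ?w) {\<sigma> \<in> topspace T1. singular_face 1 1 \<sigma> \<in> A} = suminf ?w * indicator A Qs"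
        using meas[OF pre[of 1]] unfolding ind face_Gam suminf_mult2[OF w(2)] by simp
      have f0: "mt_face 1 XX 0 (nuw ?w) A = suminf (\<lambda>j. ?w j * indicator A (Q j))"
        using pre[of 0] True m0 by (simp add: mt_face_def nuw_def)
      have f1: "mt_face 1 XX 1 (nuw ?w) A = suminf ?w * indicator A Qs"
        using pre[of 1] True m1 by (simp add: mt_face_def nuw_def)
      have "mt_boundary 1 XX (nuw ?w) A = mt_face 1 XX 0 (nuw ?w) A - mt_face 1 XX 1 (nuw ?w) A"
        by (simp add: mt_boundary_def)
      also have "\<dots> = chainw ?w A" using chainw_props(3)[OF w True] f0 f1 by simp
      finally show ?thesis .
    qed
  qed
  show ?thesis unfolding mt_boundaries_def using ch bd by force
qed

end


context warsaw begin

lemma integral_tendsto: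
  assumes f: "continuous_map T0 euclideanreal f"
  shows "(\<lambda>n. signed_integral T0 (chainw (tr n)) f) \<longlonglongrightarrow> signed_integral T0 (chainw aw) f"
proof -
  obtain B where B: "\<And>j. \<bar>f (Q j)\<bar> \<le> B" using f_Q_bounded[OF f] by blast
  have e1: "signed_integral T0 (chainw (tr n)) f = (\<Sum>j<n. aw j * f (Q j)) - (\<Sum>j<n. aw j) * f Qs" for n
  proof -
    have "suminf (\<lambda>j. tr n j * f (Q j)) = (\<Sum>j\<in>{..<n}. tr n j * f (Q j))"
      by (rule suminf_finite) (auto simp: tr_def)
    moreover have "suminf (tr n) = (\<Sum>j<n. aw j)" using tr_sums by (rule sums_unique[symmetric])
    ultimately show ?thesis
      using chainw_props(2)[OF tr_nonneg tr_summable f B, of n] by (simp add: tr_def)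
  qed
  have e2: "signed_integral T0 (chainw aw) f = suminf (\<lambda>j. aw j * f (Q j)) - suminf aw * f Qs"
    by (rule chainw_props(2)[OF aw_nonneg aw_summable f B])
  have s: "summable (\<lambda>j. aw j * f (Q j))"
  proof (rule summable_comparison_test[OF _ summable_mult2[OF aw_summable, of B]])
    show "\<exists>N. \<forall>n\<ge>N. norm (aw n * f (Q n)) \<le> aw n * B"
      using B aw_nonneg by (auto simp: abs_mult intro: mult_left_mono)
  qed
  show ?thesis unfolding e1 e2
    by (intro tendsto_diff tendsto_mult_right summable_LIMSEQ s aw_summable)
qed

lemma conv:
  assumes "openin (berlanga_chains 0 XX) U" "chainw aw \<in> U"
  shows "\<forall>\<^sub>F n in sequentially. chainw (tr n) \<in> U"
proof -
  have "generate_topology_on {{\<mu> \<in> mt_chains 0 XX. signed_integral T0 \<mu> f \<in> U} | f U.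
        continuous_map T0 euclideanreal f \<and> open U} U"
    using assms(1) unfolding berlanga_chains_def by (rule openin_topology_generated_by)
  then show ?thesis using assms(2)
  proof (induction rule: generate_topology_on.induct)
    case Empty then show ?case by simp
  next
    case (Int a b) then show ?case by (auto intro: eventually_conj)
  next
    case (UN K)
    then obtain k where "k \<in> K" "chainw aw \<in> k" by blast
    then have "\<forall>\<^sub>F n in sequentially. chainw (tr n) \<in> k" using UN by blast
    then show ?case using \<open>k \<in> K\<close> by (auto elim: eventually_mono)
  next
    case (Basis s)
    then obtain f V where s: "s = {\<mu> \<in> mt_chains 0 XX. signed_integral T0 \<mu> f \<in> V}"
      and f: "continuous_map T0 euclideanreal f" and V: "open V" by blast
    have "signed_integral T0 (chainw aw) f \<in> V" using Basis.prems s by simp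
    then have "\<forall>\<^sub>F n in sequentially. signed_integral T0 (chainw (tr n)) f \<in> V"
      using topological_tendstoD[OF integral_tendsto[OF f] V] by blast
    then show ?case
      by (rule eventually_mono) (simp add: s chainw_props(1)[OF tr_nonneg tr_summable])
  qed
qed

lemma mu_not_boundary: "chainw aw \<notin> mt_boundaries 0 XX"
proof
  assume "chainw aw \<in> mt_boundaries 0 XX"
  then obtain \<nu> where \<nu>: "\<nu> \<in> mt_chains 1 XX" "chainw aw = mt_boundary 1 XX \<nu>"
    unfolding mt_boundaries_def by auto
  have "mt_boundary 1 XX \<nu> (L0 k) = 1 / (real k + 1)" for k
  proof -
    have "(\<lambda>j. aw j * indicator (L0 k) (Q j)) = (\<lambda>j. if k \<le> j then aw j else 0)"
      by (auto simp: indicator_def Q_in_L0)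
    then have "chainw aw (L0 k) = 1 / (real k + 1)"
      using chainw_props(3)[OF aw_nonneg aw_summable L0_borel] Qs_notin_L0[of k] sums_unique[OF tail_sums[of k]]
      by simp
    then show ?thesis using \<nu>(2) by simp
  qed
  then show False by (rule not_boundary[OF \<nu>(1) _ not_summable_inv])
qed

lemma topspace_berlanga: "topspace (berlanga_chains 0 XX) = mt_chains 0 XX"
proof -
  have "mt_chains 0 XX = {\<mu> \<in> mt_chains 0 XX. signed_integral T0 \<mu> (\<lambda>_. 0) \<in> UNIV}" by simp
  then have "mt_chains 0 XX \<in> {{\<mu> \<in> mt_chains 0 XX. signed_integral T0 \<mu> f \<in> U} | f U.
        continuous_map T0 euclideanreal f \<and> open U}"
    by (intro CollectI exI[of _ "\<lambda>_. 0"] exI[of _ UNIV]) auto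
  then show ?thesis unfolding berlanga_chains_def by auto
qed

lemma main: "\<not> Hausdorff_space (mt_homology_berlanga 0 XX)"
proof
  assume H: "Hausdorff_space (mt_homology_berlanga 0 XX)"
  let ?q = "mt_class 0 XX"
  let ?T = "subtopology (berlanga_chains 0 XX) (mt_cycles 0 XX)"
  have cyc: "mt_cycles 0 XX = mt_chains 0 XX" by (simp add: mt_cycles_def)
  have tT: "topspace ?T = mt_chains 0 XX" by (simp add: topspace_berlanga cyc)
  define \<mu> where "\<mu> = chainw aw"
  define z :: "((nat \<Rightarrow> real) \<Rightarrow> real \<times> real) set \<Rightarrow> real" where "z = (\<lambda>A. 0)"
  have \<mu>c: "\<mu> \<in> mt_chains 0 XX" unfolding \<mu>_def by (rule chainw_props(1)[OF aw_nonneg aw_summable])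
  have zc: "z \<in> mt_chains 0 XX" unfolding z_def by (rule mt_chains_zero)
  have top: "topspace (mt_homology_berlanga 0 XX) = ?q ` mt_chains 0 XX"
    unfolding mt_homology_berlanga_def topspace_quotient_topology tT ..
  have ne: "?q \<mu> \<noteq> ?q z"
  proof
    assume "?q \<mu> = ?q z"
    moreover have "\<mu> \<in> ?q \<mu>" by (rule mt_class_self) (simp add: cyc \<mu>c)
    ultimately have "\<mu> \<in> mt_class 0 XX (\<lambda>A. 0)" by (simp add: z_def)
    then show False using mu_not_boundary by (simp add: mt_class_zero_iff \<mu>_def)
  qed
  have in1: "?q \<mu> \<in> topspace (mt_homology_berlanga 0 XX)" using top \<mu>c by simp
  have in2: "?q z \<in> topspace (mt_homology_berlanga 0 XX)" using top zc by simp
  obtain U V where UV: "openin (mt_homology_berlanga 0 XX) U" "openin (mt_homology_berlanga 0 XX) V"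
    "?q \<mu> \<in> U" "?q z \<in> V" "disjnt U V"
    using H in1 in2 ne unfolding Hausdorff_space_def by metis
  have "openin ?T {x \<in> topspace ?T. ?q x \<in> U}"
    using UV(1) unfolding mt_homology_berlanga_def openin_quotient_topology by blast
  then obtain O' where O': "openin (berlanga_chains 0 XX) O'" "{x \<in> topspace ?T. ?q x \<in> U} = O' \<inter> mt_cycles 0 XX"
    unfolding openin_subtopology by blast
  have "\<mu> \<in> {x \<in> topspace ?T. ?q x \<in> U}" using UV(3) \<mu>c tT by simp
  then have "\<mu> \<in> O' \<inter> mt_cycles 0 XX" unfolding O'(2) .
  then have "\<mu> \<in> O'" by simp
  then have "\<forall>\<^sub>F n in sequentially. chainw (tr n) \<in> O'" using conv[OF O'(1)] \<mu>_def by blast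
  then obtain n where n: "chainw (tr n) \<in> O'" unfolding eventually_sequentially by auto
  have bc: "chainw (tr n) \<in> mt_chains 0 XX" by (rule chainw_props(1)[OF tr_nonneg tr_summable])
  then have "chainw (tr n) \<in> O' \<inter> mt_cycles 0 XX" using n cyc by simp
  then have "chainw (tr n) \<in> {x \<in> topspace ?T. ?q x \<in> U}" unfolding O'(2) .
  then have "?q (chainw (tr n)) \<in> U" by simp
  moreover have "?q (chainw (tr n)) = ?q z"
    unfolding z_def by (rule mt_class_boundary[OF beta_boundary])
  ultimately have "?q z \<in> U" by simp
  then show False using UV(4,5) by (auto simp: disjnt_def)
qed

end


theorem theorem6:
  fixes g :: "real \<Rightarrow> real \<times> real"
  assumes "arc g"
    and "pathstart g = (0, -1)"
    and "pathfinish g = (warsaw_xmin, -1)"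
    and "path_image g \<inter> (warsaw_sine_part \<union> warsaw_segment) = {(0, -1), (warsaw_xmin, -1)}"
  shows "\<not> Hausdorff_space
           (mt_homology_berlanga 0
              (subtopology euclidean (warsaw_sine_part \<union> warsaw_segment \<union> path_image g)))"
proof -
  interpret warsaw g using assms by unfold_locales
  show ?thesis by (rule main)
qed

end
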